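(* Consider the volume-pricing market described in the context, treating $\kappa_{\mathrm{avg}}$ and $\kappa_{\mathrm{peak}}$ as independent variable parameters with all other parameters fixed. (i) In the opt-saturated case (i.e., when $R'(p_0)<0$), as $\kappa_{\mathrm{peak}}$ decreases (with $\kappa_{\mathrm{avg}}$ fixed), the equilibrium price $p^\star$ decreases, the equilibrium net-utility of every user increases, and the equilibrium revenue $R(p^\star)$ increases (precisely, $\partial R(p^\star)/\partial\kappa_{\mathrm{peak}}<0$); consequently user surplus and social welfare increase. (ii) In the opt-unsaturated case (i.e., when $R'(p_0)>0$), as $\kappa_{\mathrm{avg}}$ decreases, the equilibrium payment per unit traffic $p^\star\kappa_{\mathrm{avg}}$ decreases, so the equilibrium net-utility of every user increases, and the maximal revenue $\max_{p\in\mathcal P}R(p)$ increases; consequently user surplus and social welfare increase.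
   Context: Market model (single cell). There are $\hat N$ users (treated as a continuum of mass $\hat N$) in one base-station cell with capacity $C_{3g}>0$ (traffic volume per time slot), and time slots $t\in T=\{1,\dots,|T|\}$. Each user's daily traffic demand $\Phi$ is random with density $f_\Phi(x)=x^{-\sigma}/Z$ for $0\le x\le\Phi_{\max}$, where $0<\sigma<1$ and $Z=\Phi_{\max}^{1-\sigma}/(1-\sigma)$. All users share a temporal preference $w(t)> 0$ with $\sum_{t\in T}w(t)=1$; a user with demand $\Phi$ has per-slot demand $\phi(t)=w(t)\Phi$. The willingness to pay is $\gamma(t)=w(t)^{1-\theta}$ with price sensitivity $\theta\in(0,1)$. Offloading indicators: constants $\kappa_{\mathrm{avg}},\kappa_{\mathrm{peak}}\in(0,1]$ (independent of price). Delay profile and WiFi contact probabilities are homogeneous across users and time, so that every user's daily cellular (3G) traffic equals $\kappa_{\mathrm{avg}}$ times its total (3G+WiFi) traffic; and if $X_{\rm tot}(p)$ is the total traffic sent in the cell in a day at price $p$, the peak per-slot cellular traffic is $A(p)=\kappa_{\mathrm{peak}}X_{\rm tot}(p)$. Volume pricing with unit price $p>0$ per unit of cellular traffic: a user with demand $\Phi$ chooses $x(t)\in[0,\phi(t)]$ to maximize its net-utility $U_\Phi(x)=\sum_{t}w(t)^{1-\theta}x(t)^\theta-p\,\kappa_{\mathrm{avg}}\sum_t x(t)$; its optimal choice is $x^\star_\Phi(t)=w(t)\min\{\Phi,(\theta/(p\kappa_{\mathrm{avg}}))^{1/(1-\theta)}\}$ (every user participates). Then $X_{\rm tot}(p)=\hat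 N\int_0^{\Phi_{\max}}\sum_t x^\star_\Phi(t)f_\Phi(\Phi)\,d\Phi$, and the provider's revenue with linear cellular cost coefficient $\eta>0$ is $R(p)=(p-\eta)\,\kappa_{\mathrm{avg}}X_{\rm tot}(p)$. The quantity $p\kappa_{\mathrm{avg}}$ is called the payment per unit traffic. Feasible price set: $\mathcal P=\{p: R(p)>0,\ A(p)\le C_{3g}\}$; threshold price $p_0=\inf\mathcal P$. An equilibrium price is any $p^\star\in\arg\max_{p\in\mathcal P}R(p)$ (unique in both cases considered). The network is saturated at $p$ if $A(p)=C_{3g}$; for a unique equilibrium price $p^\star$, the network is called opt-saturated if it is saturated at $p^\star$ and opt-unsaturated otherwise. User surplus is the total net-utility of users; social welfare is user surplus plus provider revenue. *)

theory Defs
  imports "HOL-Analysis.Analysis"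
begin

text \<open>Single-cell volume-pricing market. The fixed parameters (everything except
  kappa_avg and kappa_peak) are bundled in a record. Time slots form a finite set mT,
  mw is the temporal preference w(t).\<close>

record 't market =
  mN      :: real
  mC      :: real
  msig    :: real
  mPhimax :: real
  mtheta  :: real
  meta    :: real
  mT      :: "'t set"
  mw      :: "'t \<Rightarrow> real"

definition valid_market :: "'t market \<Rightarrow> bool" where
  "valid_market M \<longleftrightarrow> mN M > 0 \<and> mC M > 0 \<and> 0 < msig M \<and> msig M < 1 \<and> mPhimax M > 0 \<and>
     0 < mtheta M \<and> mtheta M < 1 \<and> meta M > 0 \<and> finite (mT M) \<and> mT M \<noteq> {} \<and>
     (\<forall>t\<in>mT M. mw M t > 0) \<and> (\<Sum>t\<in>mT M. mw M t) = 1"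

definition Zc :: "'t market \<Rightarrow> real" where
  "Zc M = mPhimax M powr (1 - msig M) / (1 - msig M)"

definition dens :: "'t market \<Rightarrow> real \<Rightarrow> real" where
  "dens M x = (if 0 \<le> x \<and> x \<le> mPhimax M then x powr (- msig M) / Zc M else 0)"

definition xopt :: "'t market \<Rightarrow> real \<Rightarrow> real \<Rightarrow> real \<Rightarrow> 't \<Rightarrow> real" where
  "xopt M ka p Phi t =
     mw M t * min Phi ((mtheta M / (p * ka)) powr (1 / (1 - mtheta M)))"

text \<open>Total (3G+WiFi) traffic in the cell per day at price p.\<close>
definition Xtot :: "'t market \<Rightarrow> real \<Rightarrow> real \<Rightarrow> real" where
  "Xtot M ka p = mN M * integral {0..mPhimax M}
      (\<lambda>Phi. (\<Sum>t\<in>mT M. xopt M ka p Phi t) * dens M Phi)"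

definition Rev :: "'t market \<Rightarrow> real \<Rightarrow> real \<Rightarrow> real" where
  "Rev M ka p = (p - meta M) * ka * Xtot M ka p"

definition Apeak :: "'t market \<Rightarrow> real \<Rightarrow> real \<Rightarrow> real \<Rightarrow> real" where
  "Apeak M ka kp p = kp * Xtot M ka p"

definition Feas :: "'t market \<Rightarrow> real \<Rightarrow> real \<Rightarrow> real set" where
  "Feas M ka kp = {p. p > 0 \<and> Rev M ka p > 0 \<and> Apeak M ka kp p \<le> mC M}"

definition p0 :: "'t market \<Rightarrow> real \<Rightarrow> real \<Rightarrow> real" where
  "p0 M ka kp = Inf (Feas M ka kp)"

definition is_eq_price :: "'t market \<Rightarrow> real \<Rightarrow> real \<Rightarrow> real \<Rightarrow> bool" where
  "is_eq_price M ka kp p \<longleftrightarrow> p \<in> Feas M ka kp \<and> (\<forall>q\<in>Feas M ka kp. Rev M ka q \<le> Rev M ka p)"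

definition eq_price :: "'t market \<Rightarrow> real \<Rightarrow> real \<Rightarrow> real" where
  "eq_price M ka kp = (THE p. is_eq_price M ka kp p)"

definition opt_sat_cond :: "'t market \<Rightarrow> real \<Rightarrow> real \<Rightarrow> bool" where
  "opt_sat_cond M ka kp \<longleftrightarrow>
     (\<exists>D. (Rev M ka has_real_derivative D) (at (p0 M ka kp)) \<and> D < 0)"

definition opt_unsat_cond :: "'t market \<Rightarrow> real \<Rightarrow> real \<Rightarrow> bool" where
  "opt_unsat_cond M ka kp \<longleftrightarrow>
     (\<exists>D. (Rev M ka has_real_derivative D) (at (p0 M ka kp)) \<and> D > 0)"

definition netutil :: "'t market \<Rightarrow> real \<Rightarrow> real \<Rightarrow> ('t \<Rightarrow> real) \<Rightarrow> real" where
  "netutil M ka p x = (\<Sum>t\<in>mT M. mw M t powr (1 - mtheta M) * x t powr mtheta M)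
                      - p * ka * (\<Sum>t\<in>mT M. x t)"

definition user_util :: "'t market \<Rightarrow> real \<Rightarrow> real \<Rightarrow> real \<Rightarrow> real" where
  "user_util M ka p Phi = netutil M ka p (xopt M ka p Phi)"

definition usurplus :: "'t market \<Rightarrow> real \<Rightarrow> real \<Rightarrow> real" where
  "usurplus M ka p = mN M * integral {0..mPhimax M} (\<lambda>Phi. user_util M ka p Phi * dens M Phi)"

definition welfare :: "'t market \<Rightarrow> real \<Rightarrow> real \<Rightarrow> real" where
  "welfare M ka p = usurplus M ka p + Rev M ka p"

end

theory Submission
  imports Defs
begin


locale mkt =
  fixes M :: "'t market"
  assumes vm: "valid_market M"
begin

definition "s = 1 - msig M"
definition "Ph = mPhimax M"
definition "th = mtheta M"
definition "H2 m = m * Ph powr s / s - m powr (s+1) / (s*(s+1))"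
definition "mq q = (th / q) powr (1 / (1 - th))"
definition "G q = mN M * H2 (min (mq q) Ph) / Zc M"

lemma basics: "0 < s" "s < 1" "0 < Ph" "0 < th" "th < 1" "0 < meta M" "0 < mN M" "0 < mC M"
  "Zc M = Ph powr s / s" "0 < Zc M" "finite (mT M)" "(\<Sum>t\<in>mT M. mw M t) = 1" "\<And>t. t \<in> mT M \<Longrightarrow> mw M t > 0"
  using vm by (auto simp: valid_market_def s_def Ph_def th_def Zc_def)

lemma alg1: "(s::real) > 0 \<Longrightarrow> v * a / (s + 1) + v * (b / s - a / s) = v * b / s - v * a / (s * (s + 1))"
proof -
  assume s: "s > 0"
  have k: "1/(s+1) - 1/s = -1/(s*(s+1))" using s by (simp add: field_simps)
  have "v * a / (s + 1) + v * (b / s - a / s) = v * b / s + v * a * (1/(s+1) - 1/s)"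
    by (simp add: algebra_simps)
  also have "\<dots> = v * b / s - v * a / (s * (s + 1))" by (simp add: k)
  finally show ?thesis .
qed

lemma integral_min:
  assumes mu: "mu > 0"
  shows "((\<lambda>x. min x mu * dens M x) has_integral (H2 (min mu Ph) / Zc M)) {0..Ph}"
proof -
  note b = basics
  define v where "v = min mu Ph"
  have v: "0 < v" "v \<le> Ph" "v \<le> mu" using mu b by (auto simp: v_def)
  have msig: "msig M = 1 - s" by (simp add: s_def)
  have i1: "((\<lambda>x. x powr s) has_integral (v powr (s+1) / (s+1))) {0..v}"
    using has_integral_powr_from_0[of s v] b v by simp
  have i1': "((\<lambda>x. min x mu * dens M x) has_integral (v powr (s+1) / (s+1) / Zc M)) {0..v}"
  proof -
    have "((\<lambda>x. x powr s / Zc M) has_integral (v powr (s+1) / (s+1) / Zc M)) {0..v}"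
      using has_integral_divide[OF i1] by simp
    moreover have "x powr s / Zc M = min x mu * dens M x" if "x \<in> {0..v}" for x
    proof -
      have "min x mu = x" using that v by auto
      moreover have "dens M x = x powr (-(1-s)) / Zc M" using that v by (simp add: dens_def msig Ph_def)
      moreover have "x * x powr (-(1-s)) = x powr s"
      proof (cases "x = 0")
        case True then show ?thesis using b by simp
      next
        case False
        then have "x > 0" using that by auto
        show ?thesis using \<open>x>0\<close> by (simp add: powr_mult_base)
      qed
      ultimately show ?thesis by simp
    qed
    ultimately show ?thesis using has_integral_cong by (smt (verit))
  qed
  have i2: "((\<lambda>x. x powr (-(1-s))) has_integral (Ph powr s / s - v powr s / s)) {v..Ph}"
  proof (rule fundamental_theorem_of_calculus_interior[where f="\<lambda>x. x powr s / s"])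
    show "v \<le> Ph" using v by simp
    show "continuous_on {v..Ph} (\<lambda>x. x powr s / s)"
      by (intro continuous_intros) (use v b in auto)
    fix x assume "x \<in> {v<..<Ph}"
    then have "x > 0" using v by auto
    have "((\<lambda>x. x powr s / s) has_real_derivative (s * x powr (s - 1) / s)) (at x)"
      using DERIV_cdivide[OF has_real_derivative_powr[OF \<open>x>0\<close>, of s], of s] by simp
    moreover have "s * x powr (s - 1) / s = x powr (-(1-s))" using b by simp
    ultimately show "((\<lambda>x. x powr s / s) has_vector_derivative x powr (-(1-s))) (at x)"
      by (simp add: has_real_derivative_iff_has_vector_derivative)
  qed
  have i2': "((\<lambda>x. min x mu * dens M x) has_integral (v * (Ph powr s / s - v powr s / s) / Zc M)) {v..Ph}"
  proof -
    have "((\<lambda>x. v * x powr (-(1-s)) / Zc M) has_integral (v * (Ph powr s / s - v powr s / s) / Zc M)) {v..Ph}"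
      using has_integral_divide[OF has_integral_mult_right[OF i2, of v]] by simp
    moreover have "v * x powr (-(1-s)) / Zc M = min x mu * dens M x" if "x \<in> {v..Ph}" for x
    proof -
      have "min x mu = v" using that v by (auto simp: v_def)
      moreover have "dens M x = x powr (-(1-s)) / Zc M" using that v by (simp add: dens_def msig Ph_def)
      ultimately show ?thesis by simp
    qed
    ultimately show ?thesis using has_integral_cong by (smt (verit))
  qed
  have "((\<lambda>x. min x mu * dens M x) has_integral
     (v powr (s+1) / (s+1) / Zc M + v * (Ph powr s / s - v powr s / s) / Zc M)) {0..Ph}"
    by (rule has_integral_combine[OF _ _ i1' i2']) (use v in auto)
  moreover have "v powr (s+1) / (s+1) / Zc M + v * (Ph powr s / s - v powr s / s) / Zc M = H2 v / Zc M"
  proof -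
    have "v powr (s+1) = v * v powr s" using v by (simp add: powr_add)
    then have "v powr (s+1) / (s+1) + v * (Ph powr s / s - v powr s / s) = H2 v"
      using alg1[OF b(1), of v "v powr s" "Ph powr s"] \<open>v powr (s+1) = v * v powr s\<close> by (simp add: H2_def)
    then show ?thesis by (metis add_divide_distrib)
  qed
  ultimately show ?thesis by (simp add: v_def)
qed

lemma Xtot_eq:
  assumes "p > 0" "ka > 0"
  shows "Xtot M ka p = G (p * ka)"
proof -
  note b = basics
  have mu: "mq (p*ka) > 0" using assms b by (simp add: mq_def)
  have "(\<Sum>t\<in>mT M. xopt M ka p x t) = min x (mq (p*ka))" for x
  proof -
    have "(\<Sum>t\<in>mT M. xopt M ka p x t) = (\<Sum>t\<in>mT M. mw M t) * min x (mq (p*ka))"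
      by (simp add: xopt_def mq_def th_def sum_distrib_right)
    then show ?thesis using b by simp
  qed
  then have "Xtot M ka p = mN M * integral {0..Ph} (\<lambda>x. min x (mq (p*ka)) * dens M x)"
    by (simp add: Xtot_def Ph_def)
  also have "\<dots> = G (p*ka)"
    using integral_unique[OF integral_min[OF mu]] by (simp add: G_def)
  finally show ?thesis .
qed

definition "r = 1 / (1 - th)"
definition "Kc = mN M / Zc M"
definition "qbr = th / Ph powr (1 - th)"

lemma r_pos: "r > 1" using basics by (simp add: r_def)
lemma Kc_pos: "Kc > 0" using basics by (simp add: Kc_def)

lemma mq_pos: "q > 0 \<Longrightarrow> mq q > 0" using basics by (simp add: mq_def)

lemma mq_less: "0 < q1 \<Longrightarrow> q1 < q2 \<Longrightarrow> mq q2 < mq q1"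
proof -
  assume q: "0 < q1" "q1 < q2"
  have "th / q2 < th / q1" using q basics by (simp add: divide_strict_left_mono)
  moreover have "0 \<le> th / q2" using q basics by simp
  ultimately show ?thesis unfolding mq_def using r_pos powr_less_mono2[of r] by (simp add: r_def[symmetric])
qed

lemma mq_le: "0 < q1 \<Longrightarrow> q1 \<le> q2 \<Longrightarrow> mq q2 \<le> mq q1"
  using mq_less by (cases "q1 = q2") (auto intro: less_imp_le)

lemma qbr_pos: "qbr > 0" using basics by (simp add: qbr_def)

lemma mq_qbr: "mq qbr = Ph"
proof -
  have "th / qbr = Ph powr (1 - th)" using basics by (simp add: qbr_def)
  then have "mq qbr = (Ph powr (1 - th)) powr (1 / (1 - th))" by (simp add: mq_def)
  also have "\<dots> = Ph" using basics by (simp add: powr_powr)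
  finally show ?thesis .
qed

lemma mq_le_iff: "q > 0 \<Longrightarrow> (mq q \<le> Ph \<longleftrightarrow> qbr \<le> q)"
  using mq_less[of q qbr] mq_less[of qbr q] mq_qbr qbr_pos by (cases q qbr rule: linorder_cases) auto

lemma mq_less_iff: "q > 0 \<Longrightarrow> (mq q < Ph \<longleftrightarrow> qbr < q)"
  using mq_less[of q qbr] mq_less[of qbr q] mq_qbr qbr_pos by (cases q qbr rule: linorder_cases) auto

lemma mq_deriv: "q > 0 \<Longrightarrow> (mq has_real_derivative (- (r * mq q / q))) (at q)"
proof -
  assume q: "q > 0"
  have tq: "th / q > 0" using q basics by simp
  have d1: "((\<lambda>q. th / q) has_real_derivative (- th / q^2)) (at q)"
    using q by (auto intro!: derivative_eq_intros simp: power2_eq_square field_simps)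
  have "((\<lambda>q. (th / q) powr r) has_real_derivative (r * (th / q) powr (r - 1) * (- th / q^2))) (at q)"
    using DERIV_chain2[OF has_real_derivative_powr[OF tq, of r] d1] by simp
  moreover have "r * (th / q) powr (r - 1) * (- th / q^2) = - (r * mq q / q)"
  proof -
    have e: "(th / q) * (th / q) powr (r - 1) = (th / q) powr r"
      using powr_mult_base[OF less_imp_le[OF tq], of "r - 1"] by simp
    have "- (r * mq q / q) = - (r * ((th / q) * (th / q) powr (r - 1)) / q)"
      by (simp only: e mq_def r_def[symmetric])
    also have "\<dots> = r * (th / q) powr (r - 1) * (- th / q^2)"
      using q by (simp add: power2_eq_square field_simps)
    finally show ?thesis by simp
  qed
  moreover have "mq = (\<lambda>q. (th / q) powr r)" by (simp add: mq_def[abs_def] r_def)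
  ultimately show ?thesis by simp
qed

lemma mq_cont: "continuous_on {0<..} mq"
  using mq_deriv by (meson DERIV_isCont continuous_at_imp_continuous_on greaterThan_iff)

lemma H2_deriv: "m > 0 \<Longrightarrow> (H2 has_real_derivative ((Ph powr s - m powr s) / s)) (at m)"
proof -
  assume m: "m > 0"
  have a: "((\<lambda>m. m * (Ph powr s) / s) has_real_derivative Ph powr s / s) (at m)"
    using DERIV_cdivide[OF DERIV_cmult_Id[of "Ph powr s" m], of s] by (simp add: mult.commute)
  have b: "((\<lambda>m. m powr (s+1) / (s * (s + 1))) has_real_derivative ((s + 1) * m powr (s + 1 - 1)) / (s * (s + 1))) (at m)"
    using DERIV_cdivide[OF has_real_derivative_powr[OF m]] .
  have "(H2 has_real_derivative (Ph powr s / s - ((s + 1) * m powr (s + 1 - 1)) / (s * (s + 1)))) (at m)"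
    unfolding H2_def[abs_def] using DERIV_diff[OF a b] .
  moreover have "Ph powr s / s - ((s + 1) * m powr (s + 1 - 1)) / (s * (s + 1)) = (Ph powr s - m powr s) / s"
  proof -
    have "(s + 1) * m powr s / (s * (s + 1)) = m powr s / s" using basics(1)
      by (metis add_pos_pos less_numeral_extra(1) mult.commute nonzero_mult_div_cancel_left order_less_irrefl times_divide_eq_right divide_divide_eq_left)
    then show ?thesis by (simp add: diff_divide_distrib)
  qed
  ultimately show ?thesis by simp
qed

lemma H2_cont: "continuous_on {0<..} H2"
  using H2_deriv by (meson DERIV_isCont continuous_at_imp_continuous_on greaterThan_iff)

lemma H2_strict: "0 < a \<Longrightarrow> a < b \<Longrightarrow> b \<le> Ph \<Longrightarrow> H2 a < H2 b"
proof -
  assume ab: "0 < a" "a < b" "b \<le> Ph"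
  show ?thesis
  proof (rule DERIV_pos_imp_increasing_open[OF ab(2)])
    fix x assume x: "a < x" "x < b"
    then have "x powr s < Ph powr s" using ab basics by (intro powr_less_mono2) auto
    then show "\<exists>y. DERIV H2 x :> y \<and> y > 0" using H2_deriv[of x] x ab basics by auto
  next
    show "continuous_on {a..b} H2" using H2_cont by (rule continuous_on_subset) (use ab in auto)
  qed
qed

lemma H2_le: "0 < a \<Longrightarrow> a \<le> b \<Longrightarrow> b \<le> Ph \<Longrightarrow> H2 a \<le> H2 b"
  using H2_strict by (cases "a = b") (auto intro: less_imp_le)

lemma H2_pos: "0 < m \<Longrightarrow> m \<le> Ph \<Longrightarrow> 0 < H2 m"
proof -
  assume m: "0 < m" "m \<le> Ph"
  have "m powr s \<le> Ph powr s" using m basics by (intro powr_mono2) auto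
  have e: "m powr (s+1) = m * m powr s" using m by (simp add: powr_add)
  have "m powr s / (s * (s + 1)) < Ph powr s / s"
  proof -
    have "m powr s / (s * (s + 1)) < m powr s / s"
      using m basics by (intro divide_strict_left_mono) (auto simp: add_pos_pos)
    also have "\<dots> \<le> Ph powr s / s" using \<open>m powr s \<le> Ph powr s\<close> basics by (simp add: divide_right_mono)
    finally show ?thesis .
  qed
  then have "m * (m powr s / (s * (s + 1))) < m * (Ph powr s / s)" by (rule mult_strict_left_mono) (use m in simp)
  then have "m * m powr s / (s * (s + 1)) < m * Ph powr s / s" by (metis times_divide_eq_right)
  then show ?thesis unfolding H2_def e by linarith
qed

lemma G_def2: "G q = Kc * H2 (min (mq q) Ph)" by (simp add: G_def Kc_def)

lemma G_pos: "q > 0 \<Longrightarrow> G q > 0"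
  unfolding G_def2 using Kc_pos H2_pos[of "min (mq q) Ph"] mq_pos[of q] basics by simp

lemma G_mono: "0 < q1 \<Longrightarrow> q1 \<le> q2 \<Longrightarrow> G q2 \<le> G q1"
  unfolding G_def2 using Kc_pos mq_le[of q1 q2] mq_pos[of q2] basics
  by (intro mult_left_mono H2_le) auto

lemma G_strict: "0 < q1 \<Longrightarrow> q1 < q2 \<Longrightarrow> qbr < q2 \<Longrightarrow> G q2 < G q1"
proof -
  assume q: "0 < q1" "q1 < q2" "qbr < q2"
  have "mq q2 < Ph" using mq_less_iff[of q2] q by simp
  have "mq q2 < min (mq q1) Ph" using mq_less[OF q(1,2)] \<open>mq q2 < Ph\<close> by simp
  then have "H2 (min (mq q2) Ph) < H2 (min (mq q1) Ph)"
    using H2_strict[of "mq q2" "min (mq q1) Ph"] mq_pos[of q2] q basics \<open>mq q2 < Ph\<close> by simp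
  then show ?thesis unfolding G_def2 using Kc_pos by simp
qed

lemma G_cont: "continuous_on {0<..} G"
proof -
  have "continuous_on {0<..} (\<lambda>q. min (mq q) Ph)" by (intro continuous_intros mq_cont)
  moreover have "(\<lambda>q. min (mq q) Ph) ` {0<..} \<subseteq> {0<..}" using mq_pos basics by auto
  ultimately have "continuous_on {0<..} (\<lambda>q. H2 (min (mq q) Ph))"
    using continuous_on_compose2[OF H2_cont] by blast
  then show ?thesis unfolding G_def2[abs_def] by (intro continuous_intros)
qed

definition "H2d m = (Ph powr s - m powr s) / s"
definition "G2 q = Kc * H2 (mq q)"
definition "G2d q = Kc * H2d (mq q) * (- (r * mq q / q))"
definition "Dv c q = G2 q + (q - c) * G2d q"

lemma G2_deriv: "q > 0 \<Longrightarrow> (G2 has_real_derivative G2d q) (at q)"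
proof -
  assume q: "q > 0"
  have "((\<lambda>q. H2 (mq q)) has_real_derivative (H2d (mq q) * (- (r * mq q / q)))) (at q)"
    using DERIV_chain2[OF H2_deriv[OF mq_pos[OF q]] mq_deriv[OF q]] by (simp add: H2d_def)
  from DERIV_cmult[OF this, of Kc] show ?thesis by (simp add: G2_def[abs_def] G2d_def mult.assoc)
qed

lemma G2_cont: "continuous_on {0<..} G2"
  using G2_deriv by (meson DERIV_isCont continuous_at_imp_continuous_on greaterThan_iff)

lemma G_G2: "q > 0 \<Longrightarrow> qbr \<le> q \<Longrightarrow> G q = G2 q"
  using mq_le_iff[of q] by (simp add: G_def2 G2_def)

lemma G2_pos: "q > 0 \<Longrightarrow> qbr \<le> q \<Longrightarrow> G2 q > 0"
  using G_G2 G_pos by force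

lemma H2d_pos: "0 < m \<Longrightarrow> m < Ph \<Longrightarrow> H2d m > 0"
proof -
  assume m: "0 < m" "m < Ph"
  then have "m powr s < Ph powr s" using basics by (intro powr_less_mono2) auto
  then show ?thesis using basics by (simp add: H2d_def)
qed

lemma G2d_neg: "qbr < q \<Longrightarrow> G2d q < 0"
proof -
  assume q: "qbr < q"
  then have q0: "q > 0" using qbr_pos by linarith
  have "H2d (mq q) > 0" using H2d_pos[OF mq_pos[OF q0]] mq_less_iff[OF q0] q by simp
  moreover have "r * mq q / q > 0" using r_pos mq_pos[OF q0] q0 by simp
  ultimately have "Kc * H2d (mq q) * (r * mq q / q) > 0" using Kc_pos by (intro mult_pos_pos)
  moreover have "G2d q = - (Kc * H2d (mq q) * (r * mq q / q))" by (simp add: G2d_def)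
  ultimately show ?thesis by linarith
qed

lemma G2d_qbr: "G2d qbr = 0" by (simp add: G2d_def H2d_def mq_qbr)

lemma Dv_qbr: "Dv c qbr = G2 qbr" by (simp add: Dv_def G2d_qbr)

lemma Dv_self: "Dv c c = G2 c" by (simp add: Dv_def)

lemma Dv_cont: "continuous_on {0<..} (Dv c)"
proof -
  have "\<forall>x\<in>{0<..}. mq x \<ge> 0 \<and> (mq x = 0 \<longrightarrow> s > 0)"
    using mq_pos basics(1) by (auto intro: less_imp_le)
  then have "continuous_on {0<..} (\<lambda>q. mq q powr s)"
    by (rule continuous_on_powr'[OF mq_cont continuous_on_const])
  then have "continuous_on {0<..} G2d"
    unfolding G2d_def[abs_def] H2d_def by (intro continuous_intros mq_cont) (use mq_pos basics(1) in fastforce)+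
  then show ?thesis unfolding Dv_def[abs_def] by (intro continuous_intros G2_cont)
qed

lemma alg3:
  fixes K m A y q c r s :: real
  assumes s: "s > 0" and q: "q > 0"
  shows "K * (m * A / s - m * y / (s * (s + 1))) + (q - c) * (K * ((A - y) / s) * (- (r * m / q)))
     = K * m / s * (A - (1 / (s + 1)) * y - ((1 - c / q) * r) * (A - y))"
proof -
  have e1: "(q - c) * (K * ((A - y) / s) * (- (r * m / q))) = - (K * m / s) * (((q - c) / q) * r * (A - y))"
    using s q by (simp add: field_simps)
  have e2: "(q - c) / q = 1 - c / q" using q by (simp add: diff_divide_distrib)
  have e3: "m * y / (s * (s + 1)) = m / s * ((1 / (s + 1)) * y)" by simp
  show ?thesis unfolding e1 e2 e3 by (simp add: divide_inverse algebra_simps)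
qed

lemma Dv_form:
  assumes q: "q > 0"
  shows "Dv c q = Kc * mq q / s * (Ph powr s - (1 / (s + 1)) * mq q powr s
                    - ((1 - c / q) * r) * (Ph powr s - mq q powr s))"
proof -
  have m: "mq q > 0" using mq_pos[OF q] by simp
  have e: "mq q powr (s + 1) = mq q * mq q powr s" using m by (simp add: powr_add)
  have "Dv c q = Kc * (mq q * Ph powr s / s - mq q * mq q powr s / (s * (s + 1)))
       + (q - c) * (Kc * ((Ph powr s - mq q powr s) / s) * (- (r * mq q / q)))"
    by (simp add: Dv_def G2_def G2d_def H2_def H2d_def e)
  also have "\<dots> = Kc * mq q / s * (Ph powr s - (1 / (s + 1)) * mq q powr s
                    - ((1 - c / q) * r) * (Ph powr s - mq q powr s))"
    using alg3[OF basics(1) q] .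
  finally show ?thesis .
qed

lemma alg2:
  fixes A ya yb Pa Pb t :: real
  assumes "0 < t" "t < 1" "0 < yb" "yb < ya" "ya \<le> A" "0 < Pa" "Pa < Pb"
    and h: "A - t * ya \<le> Pa * (A - ya)"
  shows "A - t * yb < Pb * (A - yb)"
proof -
  have "A - t * ya > 0" using assms by (smt (verit) mult_less_cancel_right2 mult_pos_pos)
  then have "Pa * (A - ya) > 0" using h by linarith
  then have Aa: "A - ya > 0" using assms by (simp add: zero_less_mult_iff)
  have Ab: "A - yb > 0" using Aa assms by linarith
  have k: "(A - t * yb) * (A - ya) \<le> (A - t * ya) * (A - yb)"
  proof -
    have "(A - t * ya) * (A - yb) - (A - t * yb) * (A - ya) = A * (ya - yb) * (1 - t)"
      by (simp add: algebra_simps)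
    moreover have "A * (ya - yb) * (1 - t) \<ge> 0" using assms by simp
    ultimately show ?thesis by linarith
  qed
  also have "\<dots> \<le> Pa * (A - ya) * (A - yb)" using h Ab by (simp add: mult_right_mono)
  also have "\<dots> < Pb * (A - ya) * (A - yb)" using assms Aa Ab by simp
  finally have "(A - t * yb) * (A - ya) < (Pb * (A - yb)) * (A - ya)" by (simp add: algebra_simps)
  then show ?thesis using Aa by simp
qed

lemma SC:
  assumes c: "0 < c" "c < qa" "qa < qb" "qbr \<le> qa" and h: "Dv c qa \<le> 0"
  shows "Dv c qb < 0"
proof -
  have qa0: "qa > 0" "qb > 0" using c by auto
  define ya where "ya = mq qa powr s"
  define yb where "yb = mq qb powr s"
  define A where "A = Ph powr s"
  define Pa where "Pa = (1 - c / qa) * r"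
  define Pb where "Pb = (1 - c / qb) * r"
  have ma: "mq qa \<le> Ph" using mq_le_iff[OF qa0(1)] c by simp
  have mb: "0 < mq qb" "mq qb < mq qa" using mq_pos[OF qa0(2)] mq_less[OF qa0(1) c(3)] by auto
  have y: "0 < yb" "yb < ya" "ya \<le> A"
    using mb ma basics unfolding ya_def yb_def A_def
    by (auto intro: powr_less_mono2 powr_mono2)
  have "c / qb < c / qa" using c by (simp add: divide_strict_left_mono)
  moreover have "c / qa < 1" using c by simp
  ultimately have P: "0 < Pa" "Pa < Pb" using r_pos unfolding Pa_def Pb_def by auto
  have t: "0 < 1 / (s + 1)" "1 / (s + 1) < 1" using basics by auto
  have fa: "Kc * mq qa / s > 0" using Kc_pos mq_pos[OF qa0(1)] basics by simp
  have fb: "Kc * mq qb / s > 0" using Kc_pos mq_pos[OF qa0(2)] basics by simp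
  have "Kc * mq qa / s * (A - (1 / (s + 1)) * ya - Pa * (A - ya)) \<le> 0"
    using h unfolding Dv_form[OF qa0(1), of c] ya_def[symmetric] A_def[symmetric] Pa_def[symmetric] .
  then have "A - (1 / (s + 1)) * ya - Pa * (A - ya) \<le> 0" using fa by (smt (verit) mult_pos_pos)
  then have "A - (1 / (s + 1)) * yb < Pb * (A - yb)" using alg2[OF t y P] by linarith
  then have "Kc * mq qb / s * (A - (1 / (s + 1)) * yb - Pb * (A - yb)) < 0"
    by (intro mult_pos_neg[OF fb]) linarith
  then show ?thesis unfolding Dv_form[OF qa0(2), of c] yb_def[symmetric] A_def[symmetric] Pb_def[symmetric] .
qed

lemma Rev_eq: "p > 0 \<Longrightarrow> ka > 0 \<Longrightarrow> Rev M ka p = (p * ka - meta M * ka) * G (p * ka)"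
  by (simp add: Rev_def Xtot_eq algebra_simps)

lemma Rev_deriv:
  assumes ka: "ka > 0" and p: "p > 0" "qbr < p * ka"
  shows "(Rev M ka has_real_derivative (ka * Dv (meta M * ka) (p * ka))) (at p)"
proof -
  define c where "c = meta M * ka"
  have d1: "((\<lambda>x. x * ka) has_real_derivative ka) (at p)" by (auto intro!: derivative_eq_intros)
  have d2: "((\<lambda>x. G2 (x * ka)) has_real_derivative G2d (p * ka) * ka) (at p)"
    using DERIV_chain2[OF G2_deriv d1] p ka by simp
  have d3: "((\<lambda>x. x * ka - c) has_real_derivative ka) (at p)" by (auto intro!: derivative_eq_intros)
  have "((\<lambda>x. (x * ka - c) * G2 (x * ka)) has_real_derivative
      (ka * G2 (p * ka) + G2d (p * ka) * ka * (p * ka - c))) (at p)"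
    using DERIV_mult[OF d3 d2] by simp
  moreover have "ka * G2 (p * ka) + G2d (p * ka) * ka * (p * ka - c) = ka * Dv c (p * ka)"
    by (simp add: Dv_def algebra_simps)
  ultimately have d: "((\<lambda>x. (x * ka - c) * G2 (x * ka)) has_real_derivative ka * Dv c (p * ka)) (at p)"
    by simp
  show ?thesis
  proof (rule has_field_derivative_transform_within_open[OF d[unfolded c_def], of "{qbr / ka<..}"])
    show "p \<in> {qbr / ka<..}" using p ka by (simp add: pos_divide_less_eq)
    fix x assume "x \<in> {qbr / ka<..}"
    then have x1: "qbr < x * ka" using ka by (auto simp: pos_divide_less_eq)
    then have "0 < x * ka" using qbr_pos by linarith
    then have x: "qbr < x * ka" "x > 0" using x1 ka by (auto simp: zero_less_mult_iff)
    show "(x * ka - meta M * ka) * G2 (x * ka) = Rev M ka x"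
      using x Rev_eq[OF x(2) ka] G_G2[of "x * ka"] ka by (simp add: c_def)
  qed simp
qed

lemma G_isCont: "q > 0 \<Longrightarrow> isCont G q"
  using G_cont continuous_on_eq_continuous_at[of "{0<..}" G] by auto

lemma Dv_isCont: "q > 0 \<Longrightarrow> isCont (Dv c) q"
  using Dv_cont continuous_on_eq_continuous_at[of "{0<..}" "Dv c"] by auto

lemma cont_nbhd_less:
  fixes g :: "real \<Rightarrow> real"
  assumes "isCont g x" "g x < C"
  shows "\<exists>d>0. \<forall>y. \<bar>y - x\<bar> < d \<longrightarrow> g y < C"
proof -
  have "eventually (\<lambda>y. g y < C) (at x)"
    using order_tendstoD(2)[OF assms(1)[unfolded isCont_def] assms(2)] .
  then obtain d where d: "d > 0" "\<And>y. y \<noteq> x \<Longrightarrow> dist y x < d \<Longrightarrow> g y < C"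
    unfolding eventually_at by blast
  show ?thesis
  proof (intro exI[of _ d] conjI allI impI)
    fix y assume "\<bar>y - x\<bar> < d"
    then show "g y < C" using d assms(2) by (cases "y = x") (auto simp: dist_real_def)
  qed (use d in simp)
qed

lemma cont_nbhd_greater:
  fixes g :: "real \<Rightarrow> real"
  assumes "isCont g x" "C < g x"
  shows "\<exists>d>0. \<forall>y. \<bar>y - x\<bar> < d \<longrightarrow> C < g y"
  using cont_nbhd_less[where g="\<lambda>y. - g y" and x=x and C="- C"] assms by auto

lemma G_const: "0 < q \<Longrightarrow> q \<le> qbr \<Longrightarrow> G q = Kc * H2 Ph"
  using mq_le_iff[of q] mq_qbr by (cases "q = qbr") (auto simp: G_def2 min_def)

lemma mq_inv: "e > 0 \<Longrightarrow> mq (th / e powr (1 - th)) = e"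
proof -
  assume e: "e > 0"
  have "th / (th / e powr (1 - th)) = e powr (1 - th)" using basics e by simp
  then have "mq (th / e powr (1 - th)) = (e powr (1 - th)) powr (1 / (1 - th))" by (simp add: mq_def)
  also have "\<dots> = e" using basics e by (simp add: powr_powr)
  finally show ?thesis .
qed

lemma H2_le_lin: "m > 0 \<Longrightarrow> H2 m \<le> m * Ph powr s / s"
  unfolding H2_def using basics(1) by (simp add: add_pos_pos)

lemma V2_deriv: "x > 0 \<Longrightarrow> ((\<lambda>q. (q - c) * G2 q) has_real_derivative Dv c x) (at x)"
proof -
  assume x: "x > 0"
  have "((\<lambda>q. (q - c) * G2 q) has_real_derivative (1 * G2 x + G2d x * (x - c))) (at x)"
    by (rule DERIV_mult[OF _ G2_deriv[OF x]]) (auto intro!: derivative_eq_intros)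
  then show ?thesis by (simp add: Dv_def algebra_simps)
qed

lemma V2_cont: "0 < a \<Longrightarrow> continuous_on {a..b} (\<lambda>q. (q - c) * G2 q)"
  using V2_deriv by (intro DERIV_atLeastAtMost_imp_continuous_on) (meson less_le_trans)

lemma G2d_nonpos: "qbr \<le> x \<Longrightarrow> G2d x \<le> 0"
  using G2d_neg G2d_qbr by (cases "x = qbr") (auto intro: less_imp_le)

lemma vmax:
  assumes c: "0 < c" "c < qs" "qbr < qs" "Dv c qs = 0" and q: "q > 0" "q \<noteq> qs"
  shows "(q - c) * G q < (qs - c) * G qs"
proof -
  have qs0: "qs > 0" using c by simp
  have GG: "G x = G2 x" if "qbr \<le> x" for x using G_G2[of x] that qbr_pos by simp
  have low: "(x - c) * G x < (qs - c) * G qs" if x: "qbr \<le> x" "x < qs" for x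
  proof -
    have x0: "x > 0" using x qbr_pos by simp
    have "(x - c) * G2 x < (qs - c) * G2 qs"
    proof (rule DERIV_pos_imp_increasing_open[OF x(2)])
      fix y assume y: "x < y" "y < qs"
      have y0: "y > 0" using y x0 by simp
      have "Dv c y > 0"
      proof (cases "y \<le> c")
        case True
        have "G2d y \<le> 0" using G2d_nonpos y x by simp
        then have "(y - c) * G2d y \<ge> 0" using True by (simp add: mult_nonpos_nonpos)
        moreover have "G2 y > 0" using G2_pos[OF y0] y x by simp
        ultimately show ?thesis by (simp add: Dv_def)
      next
        case False
        show ?thesis
        proof (rule ccontr)
          assume "\<not> Dv c y > 0"
          then have "Dv c qs < 0" using SC[of c y qs] False y x c by simp
          then show False using c by simp
        qed
      qed
      then show "\<exists>z. ((\<lambda>q. (q - c) * G2 q) has_real_derivative z) (at y) \<and> z > 0"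
        using V2_deriv[OF y0] by blast
    qed (rule V2_cont[OF x0])
    then show ?thesis using GG x by simp
  qed
  show ?thesis
  proof (cases q qs rule: linorder_cases)
    case less
    show ?thesis
    proof (cases "qbr \<le> q")
      case True then show ?thesis using low less by simp
    next
      case False
      then have "G q = Kc * H2 Ph" using G_const q by simp
      moreover have "G qbr = Kc * H2 Ph" using G_const qbr_pos by simp
      moreover have KH: "Kc * H2 Ph > 0" using Kc_pos H2_pos[OF basics(3)] by simp
      moreover have "(q - c) * (Kc * H2 Ph) < (qbr - c) * (Kc * H2 Ph)"
        by (rule mult_strict_right_mono) (use False KH in auto)
      ultimately have "(q - c) * G q < (qbr - c) * G qbr" by simp
      also have "\<dots> < (qs - c) * G qs" using low[of qbr] c by simp
      finally show ?thesis .
    qed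
  next
    case equal then show ?thesis using q by simp
  next
    case greater
    have "(q - c) * G2 q < (qs - c) * G2 qs"
    proof (rule DERIV_neg_imp_decreasing_open[OF greater])
      fix y assume y: "qs < y" "y < q"
      have y0: "y > 0" using y qs0 by simp
      have "Dv c y < 0" using SC[of c qs y] y c by simp
      then show "\<exists>z. ((\<lambda>q. (q - c) * G2 q) has_real_derivative z) (at y) \<and> z < 0"
        using V2_deriv[OF y0] by blast
    qed (rule V2_cont[OF qs0])
    then show ?thesis using GG c greater by simp
  qed
qed

lemma Dv_neg_large:
  assumes c: "0 < c"
  shows "\<exists>q. B < q \<and> qbr < q \<and> Dv c q < 0"
proof -
  define A where "A = Ph powr s"
  have A: "A > 0" using basics by (simp add: A_def)
  define e where "e = (1 - 1 / r) / 2"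
  have e: "0 < e" "e < 1 / 2" using r_pos by (auto simp: e_def)
  have er: "(1 - e) * (1 - e) * r > 1"
  proof -
    have eq: "(1 - e) * (1 - e) = 1 / r + e * e" by (simp add: e_def algebra_simps)
    have "(1 - e) * (1 - e) * r = (1 / r + e * e) * r" by (simp only: eq)
    also have "\<dots> = 1 + e * e * r" using r_pos by (simp add: distrib_right)
    finally have "(1 - e) * (1 - e) * r = 1 + e * e * r" .
    then show ?thesis using e r_pos by simp
  qed
  define m0 where "m0 = e powr (1 / s) * Ph"
  have m0: "m0 > 0" using e basics by (simp add: m0_def)
  have m0s: "m0 powr s = e * A"
  proof -
    have "m0 powr s = (e powr (1 / s)) powr s * Ph powr s"
      unfolding m0_def using e basics by (simp add: powr_mult)
    also have "\<dots> = e * A" using e basics by (simp add: powr_powr A_def)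
    finally show ?thesis .
  qed
  define q1 where "q1 = th / m0 powr (1 - th)"
  have q1: "q1 > 0" "mq q1 = m0" using mq_inv[OF m0] basics m0 by (auto simp: q1_def)
  define q where "q = \<bar>B\<bar> + qbr + 1 + q1 + c / e"
  have ce: "c / e > 0" using c e by simp
  have aB: "B \<le> \<bar>B\<bar>" "0 \<le> \<bar>B\<bar>" by auto
  have q: "B < q" "qbr < q" "q1 \<le> q" "c / e \<le> q" "q > 0"
    using qbr_pos q1 ce aB unfolding q_def by linarith+
  define y where "y = mq q powr s"
  have y: "0 \<le> y" "y \<le> e * A"
  proof -
    show "0 \<le> y" by (simp add: y_def)
    have "mq q \<le> m0" using mq_le[OF q1(1) q(3)] q1 by simp
    then have "y \<le> m0 powr s" unfolding y_def using mq_pos[OF q(5)] basics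
      by (intro powr_mono2) auto
    then show "y \<le> e * A" using m0s by simp
  qed
  have cq: "c / q \<le> e"
  proof -
    have "c / q \<le> c / (c / e)" using q c e by (intro divide_left_mono) auto
    then show ?thesis using c e by simp
  qed
  have a1: "1 - e \<le> 1 - c / q" using cq by simp
  have a2: "(1 - e) * A \<le> A - y" using y by (simp add: algebra_simps)
  have "(1 - e) * r * ((1 - e) * A) \<le> (1 - c / q) * r * (A - y)"
    using a1 a2 e r_pos A by (intro mult_mono) (auto intro: mult_nonneg_nonneg)
  moreover have "(1 - e) * r * ((1 - e) * A) > A"
  proof -
    have "(1 - e) * r * ((1 - e) * A) = ((1 - e) * (1 - e) * r) * A" by (simp add: algebra_simps)
    moreover have "((1 - e) * (1 - e) * r) * A > 1 * A" using er A by (intro mult_strict_right_mono) auto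
    ultimately show ?thesis by linarith
  qed
  moreover have "(1 / (s + 1)) * y \<ge> 0" using y basics by simp
  ultimately have E: "A - (1 / (s + 1)) * y - ((1 - c / q) * r) * (A - y) < 0" by linarith
  have f: "Kc * mq q / s > 0" using Kc_pos mq_pos[OF q(5)] basics by simp
  have "Dv c q < 0" unfolding Dv_form[OF q(5)] A_def[symmetric] y_def[symmetric]
    by (rule mult_pos_neg[OF f E])
  then show ?thesis using q by blast
qed

context
  fixes ka kp :: real
  assumes ka: "ka > 0" and kp: "kp > 0"
begin

lemma Feas_iff: "p \<in> Feas M ka kp \<longleftrightarrow> meta M < p \<and> kp * G (p * ka) \<le> mC M"
proof
  assume p: "p \<in> Feas M ka kp"
  then have p0: "p > 0" "Rev M ka p > 0" "kp * Xtot M ka p \<le> mC M"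
    by (auto simp: Feas_def Apeak_def)
  have "(p * ka - meta M * ka) * G (p * ka) > 0" using p0 Rev_eq[OF p0(1) ka] by simp
  moreover have "G (p * ka) > 0" using G_pos[of "p * ka"] p0 ka by simp
  ultimately have "p * ka - meta M * ka > 0" by (simp add: zero_less_mult_iff)
  then have "meta M < p" using ka by (simp add: algebra_simps)
  then show "meta M < p \<and> kp * G (p * ka) \<le> mC M" using p0 Xtot_eq[OF p0(1) ka] by simp
next
  assume p: "meta M < p \<and> kp * G (p * ka) \<le> mC M"
  then have p0: "p > 0" using basics by linarith
  have "p * ka - meta M * ka > 0" using p ka by (simp add: algebra_simps)
  moreover have "G (p * ka) > 0" using G_pos[of "p * ka"] p0 ka by simp
  ultimately have "Rev M ka p > 0" using Rev_eq[OF p0 ka] by simp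
  then show "p \<in> Feas M ka kp" using p p0 Xtot_eq[OF p0 ka] by (simp add: Feas_def Apeak_def)
qed

lemma Feas_up: "p \<in> Feas M ka kp \<Longrightarrow> p \<le> p' \<Longrightarrow> p' \<in> Feas M ka kp"
proof -
  assume p: "p \<in> Feas M ka kp" "p \<le> p'"
  then have h: "meta M < p" "kp * G (p * ka) \<le> mC M" using Feas_iff by auto
  have "G (p' * ka) \<le> G (p * ka)" using G_mono[of "p * ka" "p' * ka"] h basics ka p(2) by simp
  then have "kp * G (p' * ka) \<le> mC M" using h kp by (meson mult_left_mono less_imp_le order_trans)
  then show ?thesis using Feas_iff h p(2) by auto
qed

lemma Feas_ne: "Feas M ka kp \<noteq> {}"
proof -
  define A where "A = Ph powr s"
  have A: "A > 0" using basics by (simp add: A_def)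
  define m0 where "m0 = min Ph (mC M * s / (kp * Kc * A))"
  have m0: "0 < m0" "m0 \<le> Ph" "m0 \<le> mC M * s / (kp * Kc * A)"
    using basics A kp Kc_pos by (auto simp: m0_def)
  define q0 where "q0 = th / m0 powr (1 - th)"
  have q0: "q0 > 0" "mq q0 = m0" using mq_inv[OF m0(1)] basics m0 by (auto simp: q0_def)
  define p where "p = max (q0 / ka) (meta M + 1)"
  have "q0 / ka \<le> p" "meta M < p" by (auto simp: p_def)
  then have p: "meta M < p" "q0 \<le> p * ka" using ka by (auto simp: pos_divide_le_eq)
  have "G (p * ka) \<le> G q0" using G_mono[OF q0(1) p(2)] .
  also have "G q0 = Kc * H2 m0" using q0 m0 by (simp add: G_def2)
  also have "\<dots> \<le> Kc * (m0 * A / s)" unfolding A_def by (rule mult_left_mono[OF H2_le_lin[OF m0(1)] less_imp_le[OF Kc_pos]])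
  finally have "kp * G (p * ka) \<le> kp * (Kc * (m0 * A / s))" by (rule mult_left_mono) (use kp in simp)
  also have "\<dots> \<le> mC M"
  proof -
    have "m0 * (kp * Kc * A) \<le> mC M * s" using m0(3) kp Kc_pos A by (simp add: pos_le_divide_eq)
    then show ?thesis using basics(1) by (simp add: field_simps)
  qed
  finally show ?thesis using Feas_iff p by blast
qed

lemma Feas_bdd: "bdd_below (Feas M ka kp)"
  by (rule bdd_belowI[of _ "meta M"]) (simp add: Feas_iff)

lemma p0_ge: "meta M \<le> p0 M ka kp"
  unfolding p0_def by (rule cInf_greatest[OF Feas_ne]) (simp add: Feas_iff)

lemma p0_lower: assumes "p \<in> Feas M ka kp" shows "p0 M ka kp \<le> p"
  unfolding p0_def by (rule cInf_lower[OF assms Feas_bdd])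

lemma above_p0: "p0 M ka kp < p \<Longrightarrow> p \<in> Feas M ka kp"
  using cInf_lessD[OF Feas_ne, of p] Feas_up unfolding p0_def by (meson less_imp_le)

lemma p0_pos: "p0 M ka kp > 0" using p0_ge basics by linarith

lemma g_isCont: "p > 0 \<Longrightarrow> isCont (\<lambda>p. kp * G (p * ka)) p"
proof -
  assume p: "p > 0"
  have "isCont (\<lambda>p. p * ka) p" by simp
  from isCont_o2[OF this G_isCont] p ka have "isCont (\<lambda>p. G (p * ka)) p" by simp
  then show ?thesis by (rule isCont_mult[OF continuous_const])
qed

lemma p0_in: "meta M < p0 M ka kp \<Longrightarrow> p0 M ka kp \<in> Feas M ka kp"
proof (rule ccontr)
  define P where "P = p0 M ka kp"
  assume h: "meta M < p0 M ka kp" "p0 M ka kp \<notin> Feas M ka kp"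
  then have "mC M < kp * G (P * ka)" using Feas_iff P_def by auto
  then obtain d where d: "d > 0" "\<And>y. \<bar>y - P\<bar> < d \<Longrightarrow> mC M < kp * G (y * ka)"
    using cont_nbhd_greater[OF g_isCont[OF p0_pos[folded P_def]]] by blast
  have "P + d / 2 \<in> Feas M ka kp" using above_p0 d P_def by simp
  then have "kp * G ((P + d / 2) * ka) \<le> mC M" using Feas_iff by auto
  moreover have "mC M < kp * G ((P + d / 2) * ka)" by (rule d(2)) (use d in simp)
  ultimately show False by linarith
qed

lemma p0_sat: "meta M < p0 M ka kp \<Longrightarrow> kp * G (p0 M ka kp * ka) = mC M"
proof -
  define P where "P = p0 M ka kp"
  assume h: "meta M < p0 M ka kp"
  then have le: "kp * G (P * ka) \<le> mC M" using p0_in Feas_iff P_def by auto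
  show ?thesis
  proof (rule ccontr)
    assume "kp * G (p0 M ka kp * ka) \<noteq> mC M"
    then have "kp * G (P * ka) < mC M" using le P_def by simp
    then obtain d where d: "d > 0" "\<And>y. \<bar>y - P\<bar> < d \<Longrightarrow> kp * G (y * ka) < mC M"
      using cont_nbhd_less[OF g_isCont[OF p0_pos[folded P_def]]] by blast
    define y where "y = max (P - d / 2) ((P + meta M) / 2)"
    have y1: "meta M < (P + meta M) / 2" "(P + meta M) / 2 < P" using h P_def by auto
    have y: "meta M < y" "y < P" "\<bar>y - P\<bar> < d" using y1 d unfolding y_def by (auto simp: less_max_iff_disj)
    have "kp * G (y * ka) < mC M" by (rule d(2)) (use y in simp)
    then have "y \<in> Feas M ka kp" using y Feas_iff by auto
    then show False using p0_lower y P_def by force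
  qed
qed


lemma sat_core:
  assumes h: "meta M < p0 M ka kp" "qbr < p0 M ka kp * ka" "Dv (meta M * ka) (p0 M ka kp * ka) < 0"
  shows "p0 M ka kp \<in> Feas M ka kp"
    and "\<And>p. p \<in> Feas M ka kp \<Longrightarrow> p \<noteq> p0 M ka kp \<Longrightarrow> Rev M ka p < Rev M ka (p0 M ka kp)"
    and "\<And>p. is_eq_price M ka kp p \<longleftrightarrow> p = p0 M ka kp"
proof -
  define P where "P = p0 M ka kp"
  define c where "c = meta M * ka"
  have c: "0 < c" "c < P * ka" using basics ka h by (auto simp: c_def P_def)
  show inF: "P \<in> Feas M ka kp" using p0_in h by (simp add: P_def)
  have strict: "Rev M ka p < Rev M ka P" if p: "p \<in> Feas M ka kp" "p \<noteq> P" for p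
  proof -
    have "P < p" using p0_lower[OF p(1)] p(2) by (simp add: P_def)
    then show ?thesis
    proof (rule DERIV_neg_imp_decreasing)
      fix x assume x: "P \<le> x" "x \<le> p"
      have x0: "x > 0" using x p0_pos P_def by (meson less_le_trans)
      have xq: "qbr < x * ka" using h x ka P_def by (meson le_less_trans less_le_trans mult_right_mono less_imp_le)
      have "Dv c (x * ka) < 0"
      proof (cases "x = P")
        case True then show ?thesis using h by (simp add: c_def P_def)
      next
        case False
        then have "P * ka < x * ka" using x ka by simp
        then show ?thesis using SC[of c "P * ka" "x * ka"] c h by (simp add: c_def P_def)
      qed
      then show "\<exists>y. DERIV (Rev M ka) x :> y \<and> y < 0"
        using Rev_deriv[OF ka x0 xq] ka by (intro exI[of _ "ka * Dv c (x * ka)"]) (simp add: c_def mult_pos_neg)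
    qed
  qed
  then show "\<And>p. p \<in> Feas M ka kp \<Longrightarrow> p \<noteq> p0 M ka kp \<Longrightarrow> Rev M ka p < Rev M ka (p0 M ka kp)"
    by (simp add: P_def)
  show "is_eq_price M ka kp p \<longleftrightarrow> p = p0 M ka kp" for p
  proof
    assume "is_eq_price M ka kp p"
    then have "p \<in> Feas M ka kp" "Rev M ka P \<le> Rev M ka p" using inF unfolding is_eq_price_def by auto
    then show "p = p0 M ka kp" using strict[of p] unfolding P_def by force
  next
    assume "p = p0 M ka kp"
    moreover have "\<forall>q\<in>Feas M ka kp. Rev M ka q \<le> Rev M ka P"
      using strict by (metis less_imp_le order_refl)
    ultimately show "is_eq_price M ka kp p" using inF unfolding is_eq_price_def P_def by simp
  qed
qed

lemma sat:
  assumes "opt_sat_cond M ka kp"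
  shows "meta M < p0 M ka kp \<and> qbr < p0 M ka kp * ka \<and> Dv (meta M * ka) (p0 M ka kp * ka) < 0"
proof -
  define P where "P = p0 M ka kp"
  define c where "c = meta M * ka"
  obtain D where D: "(Rev M ka has_real_derivative D) (at P)" "D < 0"
    using assms unfolding opt_sat_cond_def P_def by blast
  have P0: "P > 0" using p0_pos P_def by simp
  have KH: "Kc * H2 Ph > 0" using Kc_pos H2_pos[OF basics(3)] by simp
  have qb: "qbr < P * ka"
  proof (rule ccontr)
    assume "\<not> qbr < P * ka"
    then have le: "P * ka \<le> qbr" by simp
    obtain d where d: "d > 0" "\<And>h. h > 0 \<Longrightarrow> h < d \<Longrightarrow> Rev M ka P < Rev M ka (P - h)"
      using DERIV_neg_dec_left[OF D] by blast
    define h where "h = min (d / 2) (P / 2)"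
    have hh: "h > 0" "h < d" "P - h > 0" using d P0 by (auto simp: h_def)
    have le2: "(P - h) * ka \<le> qbr" using le hh ka by (smt (verit) mult_right_mono)
    have "Rev M ka (P - h) = ((P - h) * ka - c) * (Kc * H2 Ph)"
      using Rev_eq[OF hh(3) ka] G_const[OF _ le2] hh ka by (simp add: c_def)
    moreover have "Rev M ka P = (P * ka - c) * (Kc * H2 Ph)"
      using Rev_eq[OF P0 ka] G_const[OF _ le] P0 ka by (simp add: c_def)
    moreover have "((P - h) * ka - c) * (Kc * H2 Ph) < (P * ka - c) * (Kc * H2 Ph)"
      using hh ka KH by (intro mult_strict_right_mono) (auto simp: algebra_simps)
    ultimately show False using d(2)[OF hh(1,2)] by linarith
  qed
  have "D = ka * Dv c (P * ka)" using DERIV_unique[OF D(1) Rev_deriv[OF ka P0 qb]] by (simp add: c_def)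
  then have Dn: "Dv c (P * ka) < 0" using D(2) ka by (simp add: mult_less_0_iff)
  have "meta M < P"
  proof (rule ccontr)
    assume "\<not> meta M < P"
    then have "P = meta M" using p0_ge P_def by simp
    then have "P * ka = c" by (simp add: c_def)
    then have "Dv c (P * ka) = G2 c" by (simp add: Dv_self)
    moreover have "c > 0" using P0 ka \<open>P * ka = c\<close> by (metis mult_pos_pos)
    moreover have "G2 c > 0" using G2_pos[of c] qb \<open>P * ka = c\<close> \<open>c > 0\<close> by simp
    ultimately show False using Dn by simp
  qed
  then show ?thesis using qb Dn by (simp add: P_def c_def)
qed

lemma unsat:
  assumes "opt_unsat_cond M ka kp"
  shows "\<exists>qs. meta M * ka < qs \<and> qbr < qs \<and> Dv (meta M * ka) qs = 0 \<and> p0 M ka kp * ka < qs \<and>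
           (\<forall>p. is_eq_price M ka kp p \<longleftrightarrow> p = qs / ka)"
proof -
  define P where "P = p0 M ka kp"
  define c where "c = meta M * ka"
  have c0: "c > 0" using basics ka by (simp add: c_def)
  obtain D where D: "(Rev M ka has_real_derivative D) (at P)" "D > 0"
    using assms unfolding opt_unsat_cond_def P_def by blast
  have P0: "P > 0" using p0_pos P_def by simp
  define q0 where "q0 = max (P * ka) qbr"
  have Dq0: "Dv c q0 > 0"
  proof (cases "qbr < P * ka")
    case True
    then have "D = ka * Dv c (P * ka)" using DERIV_unique[OF D(1) Rev_deriv[OF ka P0 True]] by (simp add: c_def)
    then show ?thesis using True D(2) ka by (simp add: q0_def zero_less_mult_iff)
  next
    case False
    then show ?thesis using Dv_qbr G2_pos[OF qbr_pos] by (simp add: q0_def)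
  qed
  have cq0: "c \<le> q0" using p0_ge ka by (simp add: q0_def c_def P_def le_max_iff_disj)
  have q0p: "q0 > 0" using qbr_pos by (simp add: q0_def less_max_iff_disj)
  obtain qL where qL: "q0 < qL" "qbr < qL" "Dv c qL < 0" using Dv_neg_large[OF c0, of q0] by blast
  have "continuous_on {q0..qL} (Dv c)" using Dv_cont by (rule continuous_on_subset) (use q0p in auto)
  then obtain qs where qs: "q0 \<le> qs" "qs \<le> qL" "Dv c qs = 0"
    using IVT2'[of "Dv c" qL 0 q0] qL Dq0 by auto
  have "qs \<noteq> q0" using qs Dq0 by auto
  then have qs2: "q0 < qs" using qs by simp
  then have qsc: "c < qs" "qbr < qs" "P * ka < qs" using cq0 by (auto simp: q0_def)
  have RV: "Rev M ka p = (p * ka - c) * G (p * ka)" if "p > 0" for p using Rev_eq[OF that ka] by (simp add: c_def)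
  have qsF: "qs / ka \<in> Feas M ka kp" using above_p0 qsc ka by (simp add: P_def pos_less_divide_eq)
  have qsk: "qs / ka * ka = qs" using ka by simp
  have "is_eq_price M ka kp p \<longleftrightarrow> p = qs / ka" for p
  proof
    assume e: "is_eq_price M ka kp p"
    then have pF: "p \<in> Feas M ka kp" and le: "Rev M ka (qs / ka) \<le> Rev M ka p"
      using qsF unfolding is_eq_price_def by auto
    have p0': "p > 0" using pF Feas_iff basics by (meson less_trans)
    have "p * ka = qs"
    proof (rule ccontr)
      assume "p * ka \<noteq> qs"
      then have "(p * ka - c) * G (p * ka) < (qs - c) * G qs"
        using vmax[OF c0 qsc(1,2) qs(3)] p0' ka by simp
      then show False using le RV[OF p0'] RV[of "qs / ka"] qsk qsc ka c0 by (simp add: qsk)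
    qed
    then show "p = qs / ka" using ka by (simp add: eq_divide_eq)
  next
    assume "p = qs / ka"
    moreover have "Rev M ka q \<le> Rev M ka (qs / ka)" if "q \<in> Feas M ka kp" for q
    proof -
      have q0': "q > 0" using that Feas_iff basics by (meson less_trans)
      have "(q * ka - c) * G (q * ka) \<le> (qs - c) * G qs"
        using vmax[OF c0 qsc(1,2) qs(3), of "q * ka"] q0' ka by (cases "q * ka = qs") auto
      then show ?thesis using RV[OF q0'] RV[of "qs / ka"] qsk qsc ka c0 by simp
    qed
    ultimately show "is_eq_price M ka kp p" using qsF unfolding is_eq_price_def by auto
  qed
  then show ?thesis using qsc qs(3) by (auto simp: c_def P_def)
qed

end

end


context mkt begin

definition "Uf q x = (min x (mq q)) powr th - q * min x (mq q)"

lemma user_util_eq: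
  assumes p: "p > 0" and ka: "ka > 0" and x: "0 \<le> x"
  shows "user_util M ka p x = Uf (p * ka) x"
proof -
  define mu where "mu = min x (mq (p * ka))"
  have mu: "mu \<ge> 0" using mq_pos[of "p * ka"] p ka x by (simp add: mu_def)
  have xo: "xopt M ka p x t = mw M t * mu" for t by (simp add: xopt_def mu_def mq_def th_def)
  have "(\<Sum>t\<in>mT M. mw M t powr (1 - th) * xopt M ka p x t powr th) = (\<Sum>t\<in>mT M. mw M t * mu powr th)"
  proof (rule sum.cong[OF refl])
    fix t assume t: "t \<in> mT M"
    then have w: "mw M t > 0" using basics by simp
    have "mw M t powr (1 - th) * (mw M t * mu) powr th = mw M t powr (1 - th) * (mw M t powr th * mu powr th)"
      using w mu by (simp add: powr_mult)
    also have "\<dots> = (mw M t powr (1 - th) * mw M t powr th) * mu powr th" by simp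
    also have "mw M t powr (1 - th) * mw M t powr th = mw M t" using w by (simp add: powr_add[symmetric])
    finally show "mw M t powr (1 - th) * xopt M ka p x t powr th = mw M t * mu powr th" by (simp add: xo)
  qed
  also have "\<dots> = mu powr th" using basics by (simp add: sum_distrib_right[symmetric])
  finally have s1: "(\<Sum>t\<in>mT M. mw M t powr (1 - th) * xopt M ka p x t powr th) = mu powr th" .
  have s2: "(\<Sum>t\<in>mT M. xopt M ka p x t) = mu" using basics by (simp add: xo sum_distrib_right[symmetric])
  show ?thesis unfolding user_util_def netutil_def th_def[symmetric] s1 s2 Uf_def mu_def
    by (simp add: mult.assoc)
qed

lemma phi_mono:
  assumes q: "q > 0" and ab: "0 \<le> a" "a \<le> b"
  shows "b \<le> mq q \<Longrightarrow> a powr th - q * a \<le> b powr th - q * b"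
    and "mq q \<le> a \<Longrightarrow> b powr th - q * b \<le> a powr th - q * a"
proof -
  define m where "m = mq q"
  have m: "m > 0" using mq_pos[OF q] by (simp add: m_def)
  have mth: "th * m powr (th - 1) = q"
  proof -
    have "m powr (th - 1) = (th / q) powr (1 / (1 - th) * (th - 1))"
      by (simp add: m_def mq_def powr_powr)
    also have "1 / (1 - th) * (th - 1) = -1" using basics by (simp add: field_simps)
    also have "(th / q) powr (-1) = q / th" using basics q by (simp add: powr_minus_divide)
    finally show ?thesis using basics by simp
  qed
  have cont: "continuous_on {a..b} (\<lambda>z. z powr th - q * z)"
    by (intro continuous_intros continuous_on_powr') (use ab basics in auto)
  have der: "DERIV (\<lambda>z. z powr th - q * z) z :> th * z powr (th - 1) - q" if "z > 0" for z
    using DERIV_diff[OF has_real_derivative_powr[OF that, of th] DERIV_cmult_Id[of q z]] by simp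
  show "a powr th - q * a \<le> b powr th - q * b" if bm: "b \<le> mq q"
  proof (rule DERIV_nonneg_imp_increasing_open[OF ab(2) _ cont])
    fix z assume z: "a < z" "z < b"
    then have z0: "z > 0" using ab by simp
    have "m powr (th - 1) \<le> z powr (th - 1)" using z z0 bm basics unfolding m_def
      by (intro powr_mono2') auto
    then have "th * z powr (th - 1) - q \<ge> 0" using mth basics by (smt (verit) mult_left_mono)
    then show "\<exists>y. DERIV (\<lambda>z. z powr th - q * z) z :> y \<and> y \<ge> 0" using der[OF z0] by blast
  qed
  show "b powr th - q * b \<le> a powr th - q * a" if am: "mq q \<le> a"
  proof (rule DERIV_nonpos_imp_decreasing_open[OF ab(2) _ cont])
    fix z assume z: "a < z" "z < b"
    then have z0: "z > 0" using am m m_def by simp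
    have "z powr (th - 1) \<le> m powr (th - 1)" using z am m basics unfolding m_def
      by (intro powr_mono2') auto
    then have "th * z powr (th - 1) - q \<le> 0" using mth basics by (smt (verit) mult_left_mono)
    then show "\<exists>y. DERIV (\<lambda>z. z powr th - q * z) z :> y \<and> y \<le> 0" using der[OF z0] by blast
  qed
qed

lemma phi_max:
  assumes q: "q > 0" and z: "0 \<le> z" "z \<le> x"
  shows "z powr th - q * z \<le> Uf q x"
proof (cases "z \<le> min x (mq q)")
  case True
  then show ?thesis using phi_mono(1)[OF q z(1) True] by (simp add: Uf_def)
next
  case False
  then have e: "min x (mq q) = mq q" "mq q < z" using z by auto
  show ?thesis using phi_mono(2)[of q "mq q" z] e q mq_pos[OF q] by (simp add: Uf_def)
qed

lemma U_strict:
  assumes q: "0 < q1" "q1 < q2" and x: "x > 0"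
  shows "Uf q2 x < Uf q1 x"
proof -
  define mu where "mu = min x (mq q2)"
  have mu: "mu > 0" "mu \<le> x" using mq_pos[of q2] q x by (auto simp: mu_def)
  have "Uf q2 x = mu powr th - q2 * mu" by (simp add: Uf_def mu_def)
  also have "\<dots> < mu powr th - q1 * mu" using q mu by simp
  also have "\<dots> \<le> Uf q1 x" using phi_max[OF q(1) _ mu(2)] mu by simp
  finally show ?thesis .
qed

lemma Uf_cont: assumes q: "q > 0" shows "continuous_on {0..} (Uf q)"
proof -
  have f: "continuous_on {0..} (\<lambda>x. min x (mq q))" by (intro continuous_intros)
  have "\<forall>x\<in>{0..}. min x (mq q) \<ge> 0 \<and> (min x (mq q) = 0 \<longrightarrow> th > 0)" using mq_pos[OF q] basics by auto
  then have "continuous_on {0..} (\<lambda>x. min x (mq q) powr th)" by (rule continuous_on_powr'[OF f continuous_on_const])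
  then show ?thesis unfolding Uf_def[abs_def] by (intro continuous_on_diff continuous_on_mult continuous_on_const f)
qed

lemma Ud_cont:
  assumes q: "q > 0" and a: "0 < a"
  shows "continuous_on {a..Ph} (\<lambda>x. Uf q x * dens M x)"
proof -
  have "continuous_on {a..Ph} (\<lambda>x. Uf q x * (x powr (-(1 - s)) / Zc M))"
    using continuous_on_subset[OF Uf_cont[OF q], of "{a..Ph}"] a basics
    by (intro continuous_intros continuous_on_powr') auto
  moreover have "dens M x = x powr (-(1 - s)) / Zc M" if "x \<in> {a..Ph}" for x
    using that a by (simp add: dens_def Ph_def s_def)
  ultimately show ?thesis by (metis (no_types, lifting) continuous_on_cong)
qed

lemma U_int:
  assumes q: "q > 0"
  shows "(\<lambda>x. Uf q x * dens M x) integrable_on {0..Ph}"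
proof -
  define v where "v = min (mq q) Ph"
  have v: "0 < v" "v \<le> Ph" "v \<le> mq q" using mq_pos[OF q] basics by (auto simp: v_def)
  have i1: "(\<lambda>x. (x powr (th - (1 - s)) - q * x powr s) / Zc M) integrable_on {0..v}"
  proof -
    have "(\<lambda>x. x powr (th - (1 - s))) integrable_on {0..v}"
      using integrable_on_powr_from_0[of "th - (1 - s)" v] basics v by simp
    moreover have "(\<lambda>x. q * x powr s) integrable_on {0..v}"
      using integrable_on_cmult_left[OF integrable_on_powr_from_0[of s v], of q] basics v by simp
    ultimately have "(\<lambda>x. x powr (th - (1 - s)) - q * x powr s) integrable_on {0..v}"
      by (rule integrable_diff)
    then show ?thesis using basics by simp
  qed
  have e1: "Uf q x * dens M x = (x powr (th - (1 - s)) - q * x powr s) / Zc M" if x: "x \<in> {0..v}" for x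
  proof (cases "x = 0")
    case True then show ?thesis using basics by (simp add: Uf_def dens_def)
  next
    case False
    then have x0: "x > 0" using x by simp
    have mn: "min x (mq q) = x" using x v by simp
    have d: "dens M x = x powr (-(1 - s)) / Zc M" using x v by (simp add: dens_def Ph_def s_def)
    have "(x powr th - q * x) * x powr (-(1 - s)) = x powr (th - (1 - s)) - q * x powr s"
    proof -
      have "x powr th * x powr (-(1 - s)) = x powr (th - (1 - s))" by (simp only: diff_conv_add_uminus powr_add)
      moreover have "x * x powr (-(1 - s)) = x powr s" using x0 by (simp add: powr_mult_base)
      moreover have "(x powr th - q * x) * x powr (-(1 - s)) = x powr th * x powr (-(1 - s)) - q * (x * x powr (-(1 - s)))"
        by (simp only: left_diff_distrib mult.assoc)
      ultimately show ?thesis by (simp only:)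
    qed
    then show ?thesis by (simp add: Uf_def mn d)
  qed
  have "(\<lambda>x. Uf q x * dens M x) integrable_on {0..v} \<longleftrightarrow> (\<lambda>x. (x powr (th - (1 - s)) - q * x powr s) / Zc M) integrable_on {0..v}"
    by (rule integrable_cong) (rule e1)
  then have int1: "(\<lambda>x. Uf q x * dens M x) integrable_on {0..v}" using i1 by simp
  have int2: "(\<lambda>x. Uf q x * dens M x) integrable_on {v..Ph}"
    using integrable_continuous_interval[OF Ud_cont[OF q v(1)]] .
  show ?thesis using Henstock_Kurzweil_Integration.integrable_combine[OF _ v(2) int1 int2] v by simp
qed

lemma usurplus_strict:
  assumes q: "0 < q1" "q1 < q2"
  shows "integral {0..Ph} (\<lambda>x. Uf q2 x * dens M x) < integral {0..Ph} (\<lambda>x. Uf q1 x * dens M x)"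
proof -
  have q2: "q2 > 0" using q by simp
  define d where "d x = Uf q1 x * dens M x - Uf q2 x * dens M x" for x
  have dint: "d integrable_on {0..Ph}" unfolding d_def by (intro integrable_diff U_int q q2)
  have dens_pos: "dens M x > 0" if "0 < x" "x \<le> Ph" for x
    using that basics by (simp add: dens_def Ph_def)
  have dnn: "0 \<le> d x" if "x \<in> {0..Ph}" for x
  proof (cases "x = 0")
    case True then show ?thesis by (simp add: d_def dens_def)
  next
    case False
    then have "x > 0" using that by simp
    have "d x = (Uf q1 x - Uf q2 x) * dens M x" by (simp add: d_def left_diff_distrib)
    moreover have "Uf q1 x - Uf q2 x > 0" using U_strict[OF q \<open>x > 0\<close>] by simp
    moreover have "dens M x > 0" using dens_pos[of x] that \<open>x > 0\<close> by simp
    ultimately show ?thesis by simp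
  qed
  have h: "0 < Ph / 2" "Ph / 2 \<le> Ph" using basics by auto
  have a: "0 \<le> integral {0..Ph / 2} d"
    by (rule integral_nonneg[OF integrable_subinterval_real[OF dint]]) (use h dnn in auto)
  have "continuous_on {Ph / 2..Ph} d" unfolding d_def
    by (rule continuous_on_diff[OF Ud_cont[OF q(1) h(1)] Ud_cont[OF q2 h(1)]])
  then have "integral {Ph / 2..Ph} (\<lambda>x. 0) < integral {Ph / 2..Ph} d"
  proof (rule integral_less_real[OF continuous_on_const])
    show "{Ph / 2<..<Ph} \<noteq> {}" using basics by auto
    fix x assume x: "x \<in> {Ph / 2<..<Ph}"
    then have "x > 0" using h by simp
    have "d x = (Uf q1 x - Uf q2 x) * dens M x" by (simp add: d_def left_diff_distrib)
    moreover have "Uf q1 x - Uf q2 x > 0" using U_strict[OF q \<open>x > 0\<close>] by simp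
    moreover have "dens M x > 0" using dens_pos[of x] x \<open>x > 0\<close> by simp
    ultimately show "0 < d x" by simp
  qed
  then have b: "0 < integral {Ph / 2..Ph} d" by simp
  have "integral {0..Ph / 2} d + integral {Ph / 2..Ph} d = integral {0..Ph} d"
    using Henstock_Kurzweil_Integration.integral_combine[OF _ h(2) dint] h by simp
  moreover have "integral {0..Ph} d = integral {0..Ph} (\<lambda>x. Uf q1 x * dens M x) - integral {0..Ph} (\<lambda>x. Uf q2 x * dens M x)"
    unfolding d_def by (rule integral_diff) (intro U_int q q2)+
  ultimately show ?thesis using a b by linarith
qed

lemma usurplus_eq:
  assumes "p > 0" "ka > 0"
  shows "usurplus M ka p = mN M * integral {0..Ph} (\<lambda>x. Uf (p * ka) x * dens M x)"
  unfolding usurplus_def Ph_def[symmetric]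
  using user_util_eq[OF assms] by (intro arg_cong[where f="\<lambda>t. mN M * t"] integral_cong) auto

end


context mkt begin

lemma f_inv:
  assumes ka: "ka > 0" and z: "meta M < z" "qbr < z * ka"
  shows "p0 M ka (mC M / G (z * ka)) = z"
proof -
  have z0: "z > 0" using z basics by linarith
  have Gz: "G (z * ka) > 0" using G_pos[of "z * ka"] z0 ka by simp
  define k where "k = mC M / G (z * ka)"
  have k: "k > 0" using Gz basics by (simp add: k_def)
  have "Feas M ka k = {z..}"
  proof (intro set_eqI iffI)
    fix p assume "p \<in> Feas M ka k"
    then have p: "meta M < p" "k * G (p * ka) \<le> mC M" using Feas_iff[OF ka k] by auto
    then have "G (p * ka) \<le> G (z * ka)" using Gz basics by (simp add: k_def field_simps)
    moreover have p0: "p > 0" using p basics by linarith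
    ultimately show "p \<in> {z..}"
      using G_strict[of "p * ka" "z * ka"] ka z by (cases "p < z") (auto simp: mult_strict_right_mono)
  next
    fix p assume "p \<in> {z..}"
    then have p: "z \<le> p" by simp
    have "G (p * ka) \<le> G (z * ka)" using G_mono[of "z * ka" "p * ka"] z0 ka p by (simp add: mult_right_mono)
    then have "k * G (p * ka) \<le> mC M" using Gz basics by (simp add: k_def field_simps)
    then show "p \<in> Feas M ka k" using Feas_iff[OF ka k] p z by auto
  qed
  then show ?thesis by (simp add: p0_def k_def)
qed

lemma deriv_part:
  assumes ka: "0 < ka" and kp: "0 < kp" and os: "opt_sat_cond M ka kp"
  shows "\<exists>D. ((\<lambda>k. Rev M ka (eq_price M ka k)) has_real_derivative D) (at kp) \<and> D < 0"
proof -
  define c where "c = meta M * ka"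
  define P where "P = (\<lambda>k. p0 M ka k)"
  define P0 where "P0 = P kp"
  have h: "meta M < P0" "qbr < P0 * ka" "Dv c (P0 * ka) < 0"
    using sat[OF ka kp os] by (auto simp: P0_def P_def c_def)
  have P00: "P0 > 0" using h basics by linarith
  have DR: "(Rev M ka has_real_derivative (ka * Dv c (P0 * ka))) (at P0)"
    using Rev_deriv[OF ka P00 h(2)] by (simp add: c_def)
  have satk: "kp * G (P0 * ka) = mC M" using p0_sat[OF ka kp] h by (simp add: P0_def P_def)
  define S where "S = {max (meta M) (qbr / ka)<..}"
  have Sopen: "open S" by (simp add: S_def)
  have inS: "z \<in> S \<longleftrightarrow> meta M < z \<and> qbr < z * ka" for z
    using ka by (simp add: S_def pos_divide_less_eq)
  have P0S: "P0 \<in> S" using inS h by simp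
  define f where "f = (\<lambda>p. mC M / G (p * ka))"
  have gf: "\<And>z. z \<in> S \<Longrightarrow> P (f z) = z" using f_inv[OF ka] inS by (simp add: P_def f_def)
  have Spos: "z \<in> S \<Longrightarrow> z > 0" for z using inS basics by (meson less_trans)
  have contf: "continuous_on S f"
  proof -
    have "continuous_on S (\<lambda>p. p * ka)" by (intro continuous_intros)
    moreover have "(\<lambda>p. p * ka) ` S \<subseteq> {0<..}" using Spos ka by auto
    ultimately have "continuous_on S (\<lambda>p. G (p * ka))" using continuous_on_compose2[OF G_cont] by blast
    moreover have "\<forall>p\<in>S. G (p * ka) \<noteq> 0" using G_pos Spos ka by (metis mult_pos_pos less_irrefl)
    ultimately show ?thesis unfolding f_def by (intro continuous_intros) auto
  qed
  define f' where "f' = - (mC M * (G2d (P0 * ka) * ka)) / (G2 (P0 * ka))^2"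
  have G2P: "G2 (P0 * ka) > 0" using G2_pos[of "P0 * ka"] h P00 ka by simp
  have f'pos: "f' > 0"
  proof -
    have "G2d (P0 * ka) < 0" using G2d_neg h by simp
    then have "mC M * (G2d (P0 * ka) * ka) < 0" using basics ka by (simp add: mult_pos_neg mult_neg_pos)
    moreover have "(G2 (P0 * ka))^2 > 0" using G2P by simp
    ultimately have "mC M * (G2d (P0 * ka) * ka) / (G2 (P0 * ka))^2 < 0" by (rule divide_neg_pos)
    then show ?thesis by (simp add: f'_def)
  qed
  have df: "(f has_real_derivative f') (at P0)"
  proof -
    have d1: "((\<lambda>p. G2 (p * ka)) has_real_derivative G2d (P0 * ka) * ka) (at P0)"
      using DERIV_chain2[OF G2_deriv DERIV_cmult_Id[of ka P0]] P00 ka by (simp add: mult.commute)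
    have "((\<lambda>p. mC M / G2 (p * ka)) has_real_derivative f') (at P0)"
      using DERIV_divide[OF DERIV_const d1, of "mC M"] G2P by (simp add: f'_def power2_eq_square)
    then show ?thesis
    proof (rule has_field_derivative_transform_within_open[OF _ Sopen P0S])
      fix x assume "x \<in> S"
      then show "mC M / G2 (x * ka) = f x" using G_G2[of "x * ka"] inS Spos ka
        by (simp add: f_def less_imp_le)
    qed
  qed
  have fP0: "f P0 = kp" using satk kp G_pos[of "P0 * ka"] P00 ka by (simp add: f_def field_simps)
  have "(P has_derivative (\<lambda>h. inverse f' * h)) (at (f P0))"
  proof (rule has_derivative_inverse_strong[OF Sopen P0S contf gf])
    show "(f has_derivative (\<lambda>h. f' * h)) (at P0)" using df by (simp add: has_field_derivative_def)
    show "(\<lambda>h. f' * h) \<circ> (\<lambda>h. inverse f' * h) = id" using f'pos by (auto simp: fun_eq_iff)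
  qed
  then have dP: "(P has_real_derivative inverse f') (at kp)" using fP0 by (simp add: has_field_derivative_def)
  have PkP: "P kp = P0" by (simp add: P0_def)
  have dRP: "((\<lambda>k. Rev M ka (P k)) has_real_derivative (ka * Dv c (P0 * ka)) * inverse f') (at kp)"
    using DERIV_chain2[OF _ dP] DR PkP by simp
  have neg: "(ka * Dv c (P0 * ka)) * inverse f' < 0"
    using h ka f'pos by (simp add: mult_neg_pos mult_pos_neg)
  have cP: "isCont P kp" using DERIV_isCont[OF dP] .
  obtain d1 where d1: "d1 > 0" "\<And>y. \<bar>y - kp\<bar> < d1 \<Longrightarrow> meta M < P y"
    using cont_nbhd_greater[OF cP, of "meta M"] h PkP by auto
  have cP2: "isCont (\<lambda>k. P k * ka) kp" using cP by (intro continuous_intros)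
  obtain d2 where d2: "d2 > 0" "\<And>y. \<bar>y - kp\<bar> < d2 \<Longrightarrow> qbr < P y * ka"
    using cont_nbhd_greater[OF cP2, of qbr] h PkP by auto
  have cP3: "isCont (\<lambda>k. Dv c (P k * ka)) kp"
    using isCont_o2[OF cP2 Dv_isCont[of "P kp * ka" c]] PkP P00 ka by simp
  obtain d3 where d3: "d3 > 0" "\<And>y. \<bar>y - kp\<bar> < d3 \<Longrightarrow> Dv c (P y * ka) < 0"
    using cont_nbhd_less[OF cP3, of 0] h PkP by auto
  define d where "d = min kp (min d1 (min d2 d3))"
  have d: "d > 0" using d1 d2 d3 kp by (simp add: d_def)
  have ev: "eventually (\<lambda>k. Rev M ka (eq_price M ka k) = Rev M ka (P k)) (nhds kp)"
    unfolding eventually_nhds_metric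
  proof (intro exI[of _ d] conjI allI impI)
    fix y assume "dist y kp < d"
    then have y: "\<bar>y - kp\<bar> < d" by (simp add: dist_real_def)
    have y0: "y > 0" using y by (simp add: d_def abs_less_iff)
    have hy: "meta M < p0 M ka y" "qbr < p0 M ka y * ka" "Dv (meta M * ka) (p0 M ka y * ka) < 0"
      using d1(2)[of y] d2(2)[of y] d3(2)[of y] y by (auto simp: d_def P_def c_def)
    have "\<And>p. is_eq_price M ka y p \<longleftrightarrow> p = p0 M ka y" using sat_core(3)[OF ka y0 hy] .
    then have "eq_price M ka y = P y" unfolding eq_price_def P_def by (intro the_equality) auto
    then show "Rev M ka (eq_price M ka y) = Rev M ka (P y)" by simp
  qed (rule d)
  have "((\<lambda>k. Rev M ka (eq_price M ka k)) has_real_derivative (ka * Dv c (P0 * ka)) * inverse f') (at kp)"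
    using DERIV_cong_ev[OF refl ev refl] dRP by simp
  then show ?thesis using neg by blast
qed

end


context mkt begin

lemma part1:
  assumes ka: "0 < ka" and k: "0 < k1" "k1 < k2" and os1: "opt_sat_cond M ka k1" and os2: "opt_sat_cond M ka k2"
  shows "(\<exists>p. is_eq_price M ka k1 p) \<and> (\<exists>p. is_eq_price M ka k2 p) \<and>
       (\<forall>p1 p2. is_eq_price M ka k1 p1 \<and> is_eq_price M ka k2 p2 \<longrightarrow>
          p1 < p2 \<and>
          (\<forall>Phi\<in>{0<..mPhimax M}. user_util M ka p2 Phi < user_util M ka p1 Phi) \<and>
          Rev M ka p2 < Rev M ka p1 \<and>
          usurplus M ka p2 < usurplus M ka p1 \<and>
          welfare M ka p2 < welfare M ka p1)"
proof -
  have k2: "0 < k2" using k by simp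
  define P1 where "P1 = p0 M ka k1"
  define P2 where "P2 = p0 M ka k2"
  have h1: "meta M < P1" "qbr < P1 * ka" "Dv (meta M * ka) (P1 * ka) < 0"
    using sat[OF ka k(1) os1] by (auto simp: P1_def)
  have h2: "meta M < P2" "qbr < P2 * ka" "Dv (meta M * ka) (P2 * ka) < 0"
    using sat[OF ka k2 os2] by (auto simp: P2_def)
  note e1 = sat_core[OF ka k(1) h1[unfolded P1_def]]
  note e2 = sat_core[OF ka k2 h2[unfolded P2_def]]
  have ex: "(\<exists>p. is_eq_price M ka k1 p) \<and> (\<exists>p. is_eq_price M ka k2 p)" using e1(3) e2(3) by blast
  have P0s: "P1 > 0" "P2 > 0" using h1 h2 basics by linarith+
  have satk: "k2 * G (P2 * ka) = mC M" using p0_sat[OF ka k2] h2 by (simp add: P2_def)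
  have GP2: "G (P2 * ka) > 0" using G_pos[of "P2 * ka"] P0s ka by simp
  have lt: "k1 * G (P2 * ka) < mC M" using satk mult_strict_right_mono[OF k(2) GP2] by linarith
  have P2F: "P2 \<in> Feas M ka k1" using Feas_iff[OF ka k(1)] h2 lt by simp
  have P12: "P1 < P2"
  proof -
    obtain d where d: "d > 0" "\<And>y. \<bar>y - P2\<bar> < d \<Longrightarrow> k1 * G (y * ka) < mC M"
      using cont_nbhd_less[OF g_isCont[OF ka k(1) P0s(2)] lt] by blast
    define y where "y = max (P2 - d / 2) ((P2 + meta M) / 2)"
    have y1: "meta M < (P2 + meta M) / 2" "(P2 + meta M) / 2 < P2" using h2 by auto
    have y: "meta M < y" "y < P2" "\<bar>y - P2\<bar> < d" using y1 d unfolding y_def by (auto simp: less_max_iff_disj)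
    have "k1 * G (y * ka) < mC M" by (rule d(2)) (use y in simp)
    then have "y \<in> Feas M ka k1" using y Feas_iff[OF ka k(1)] by auto
    then have "P1 \<le> y" using p0_lower[OF ka k(1)] by (simp add: P1_def)
    then show ?thesis using y by simp
  qed
  have q12: "0 < P1 * ka" "P1 * ka < P2 * ka" using P12 P0s ka by auto
  have U: "\<forall>Phi\<in>{0<..mPhimax M}. user_util M ka P2 Phi < user_util M ka P1 Phi"
    using user_util_eq[OF P0s(1) ka] user_util_eq[OF P0s(2) ka] U_strict[OF q12] by auto
  have R: "Rev M ka P2 < Rev M ka P1" using e1(2)[OF P2F] P12 by (simp add: P1_def)
  have US: "usurplus M ka P2 < usurplus M ka P1"
    using usurplus_eq[OF P0s(1) ka] usurplus_eq[OF P0s(2) ka] usurplus_strict[OF q12] basics by simp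
  have W: "welfare M ka P2 < welfare M ka P1" using R US by (simp add: welfare_def)
  show ?thesis using ex e1(3) e2(3) P12 U R US W by (auto simp: P1_def P2_def)
qed

lemma part3:
  assumes kp: "0 < kp" and a: "0 < a1" "a1 < a2" and u1: "opt_unsat_cond M a1 kp" and u2: "opt_unsat_cond M a2 kp"
  shows "(\<exists>p. is_eq_price M a1 kp p) \<and> (\<exists>p. is_eq_price M a2 kp p) \<and>
       (\<forall>p1 p2. is_eq_price M a1 kp p1 \<and> is_eq_price M a2 kp p2 \<longrightarrow>
          p1 * a1 < p2 * a2 \<and>
          (\<forall>Phi\<in>{0<..mPhimax M}. user_util M a2 p2 Phi < user_util M a1 p1 Phi) \<and>
          Rev M a2 p2 < Rev M a1 p1 \<and>
          usurplus M a2 p2 < usurplus M a1 p1 \<and>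
          welfare M a2 p2 < welfare M a1 p1)"
proof -
  have a2: "0 < a2" using a by simp
  obtain q1 where q1: "meta M * a1 < q1" "qbr < q1" "Dv (meta M * a1) q1 = 0"
      "\<And>p. is_eq_price M a1 kp p \<longleftrightarrow> p = q1 / a1"
    using unsat[OF a(1) kp u1] by blast
  obtain q2 where q2: "meta M * a2 < q2" "qbr < q2" "Dv (meta M * a2) q2 = 0"
      "\<And>p. is_eq_price M a2 kp p \<longleftrightarrow> p = q2 / a2"
    using unsat[OF a2 kp u2] by blast
  define c1 where "c1 = meta M * a1"
  define c2 where "c2 = meta M * a2"
  have c: "0 < c1" "c1 < c2" using a basics by (auto simp: c1_def c2_def)
  have ex: "(\<exists>p. is_eq_price M a1 kp p) \<and> (\<exists>p. is_eq_price M a2 kp p)" using q1(4) q2(4) by blast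
  have Dq1: "Dv c2 q1 > 0"
  proof -
    have "Dv c2 q1 = Dv c1 q1 + (c1 - c2) * G2d q1" by (simp add: Dv_def algebra_simps)
    moreover have "(c1 - c2) * G2d q1 > 0" using c G2d_neg[OF q1(2)] by (simp add: mult_neg_neg)
    ultimately show ?thesis using q1(3) by (simp add: c1_def)
  qed
  have q12: "q1 < q2"
  proof (rule ccontr)
    assume "\<not> q1 < q2"
    then have "q2 \<le> q1" by simp
    moreover have "q2 \<noteq> q1" using Dq1 q2(3) by (auto simp: c2_def)
    ultimately have "q2 < q1" by simp
    then have "Dv c2 q1 < 0" using SC[of c2 q2 q1] c q2 by (simp add: c2_def less_imp_le)
    then show False using Dq1 by simp
  qed
  have q10: "0 < q1" using q1 qbr_pos by simp
  have q20: "0 < q2" using q12 q10 by simp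
  have p1: "q1 / a1 > 0" "q1 / a1 * a1 = q1" using q10 a by auto
  have p2: "q2 / a2 > 0" "q2 / a2 * a2 = q2" using q20 a2 by auto
  have U: "\<forall>Phi\<in>{0<..mPhimax M}. user_util M a2 (q2 / a2) Phi < user_util M a1 (q1 / a1) Phi"
    using user_util_eq[OF p1(1) a(1)] user_util_eq[OF p2(1) a2] U_strict[OF q10 q12] p1 p2 by auto
  have p2F: "q2 / a2 \<in> Feas M a2 kp" using q2(4) unfolding is_eq_price_def by blast
  then have kG: "kp * G q2 \<le> mC M" using Feas_iff[OF a2 kp] p2 by simp
  have p'F: "q2 / a1 \<in> Feas M a1 kp"
  proof -
    have "meta M * a1 < q2" using c q2(1) by (simp add: c1_def c2_def)
    then have "meta M < q2 / a1" using a by (simp add: pos_less_divide_eq)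
    then show ?thesis using Feas_iff[OF a(1) kp] kG a by simp
  qed
  have GP: "G q2 > 0" using G_pos q20 by simp
  have "Rev M a2 (q2 / a2) = (q2 - c2) * G q2" using Rev_eq[OF p2(1) a2] p2 by (simp add: c2_def)
  also have "\<dots> < (q2 - c1) * G q2" using c GP by (intro mult_strict_right_mono) auto
  also have "\<dots> = Rev M a1 (q2 / a1)" using Rev_eq[of "q2 / a1" a1] q20 a by (simp add: c1_def)
  also have "\<dots> \<le> Rev M a1 (q1 / a1)" using q1(4)[of "q1 / a1"] p'F unfolding is_eq_price_def by blast
  finally have R: "Rev M a2 (q2 / a2) < Rev M a1 (q1 / a1)" .
  have US: "usurplus M a2 (q2 / a2) < usurplus M a1 (q1 / a1)"
    using usurplus_eq[OF p1(1) a(1)] usurplus_eq[OF p2(1) a2] usurplus_strict[OF q10 q12] p1 p2 basics by simp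
  have W: "welfare M a2 (q2 / a2) < welfare M a1 (q1 / a1)" using R US by (simp add: welfare_def)
  show ?thesis using ex q1(4) q2(4) q12 U R US W p1 p2 by auto
qed

end

theorem theorem2:
  fixes M :: "'t market"
  assumes "valid_market M"
  shows
  "(\<forall>ka k1 k2. 0 < ka \<and> ka \<le> 1 \<and> 0 < k1 \<and> k1 < k2 \<and> k2 \<le> 1 \<and>
       opt_sat_cond M ka k1 \<and> opt_sat_cond M ka k2 \<longrightarrow>
       (\<exists>p. is_eq_price M ka k1 p) \<and> (\<exists>p. is_eq_price M ka k2 p) \<and>
       (\<forall>p1 p2. is_eq_price M ka k1 p1 \<and> is_eq_price M ka k2 p2 \<longrightarrow>
          p1 < p2 \<and>
          (\<forall>Phi\<in>{0<..mPhimax M}. user_util M ka p2 Phi < user_util M ka p1 Phi) \<and>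
          Rev M ka p2 < Rev M ka p1 \<and>
          usurplus M ka p2 < usurplus M ka p1 \<and>
          welfare M ka p2 < welfare M ka p1))
   \<and> (\<forall>ka kp. 0 < ka \<and> ka \<le> 1 \<and> 0 < kp \<and> kp \<le> 1 \<and> opt_sat_cond M ka kp \<longrightarrow>
       (\<exists>D. ((\<lambda>k. Rev M ka (eq_price M ka k)) has_real_derivative D) (at kp within {0<..1})
            \<and> D < 0))
   \<and> (\<forall>kp a1 a2. 0 < kp \<and> kp \<le> 1 \<and> 0 < a1 \<and> a1 < a2 \<and> a2 \<le> 1 \<and>
       opt_unsat_cond M a1 kp \<and> opt_unsat_cond M a2 kp \<longrightarrow>
       (\<exists>p. is_eq_price M a1 kp p) \<and> (\<exists>p. is_eq_price M a2 kp p) \<and>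
       (\<forall>p1 p2. is_eq_price M a1 kp p1 \<and> is_eq_price M a2 kp p2 \<longrightarrow>
          p1 * a1 < p2 * a2 \<and>
          (\<forall>Phi\<in>{0<..mPhimax M}. user_util M a2 p2 Phi < user_util M a1 p1 Phi) \<and>
          Rev M a2 p2 < Rev M a1 p1 \<and>
          usurplus M a2 p2 < usurplus M a1 p1 \<and>
          welfare M a2 p2 < welfare M a1 p1))"
proof -
  interpret mkt M by (rule mkt.intro[OF assms])
  have A: "\<forall>ka k1 k2. 0 < ka \<and> ka \<le> 1 \<and> 0 < k1 \<and> k1 < k2 \<and> k2 \<le> 1 \<and>
       opt_sat_cond M ka k1 \<and> opt_sat_cond M ka k2 \<longrightarrow>
       (\<exists>p. is_eq_price M ka k1 p) \<and> (\<exists>p. is_eq_price M ka k2 p) \<and>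
       (\<forall>p1 p2. is_eq_price M ka k1 p1 \<and> is_eq_price M ka k2 p2 \<longrightarrow>
          p1 < p2 \<and>
          (\<forall>Phi\<in>{0<..mPhimax M}. user_util M ka p2 Phi < user_util M ka p1 Phi) \<and>
          Rev M ka p2 < Rev M ka p1 \<and>
          usurplus M ka p2 < usurplus M ka p1 \<and>
          welfare M ka p2 < welfare M ka p1)"
  proof (intro allI impI)
    fix ka k1 k2
    assume h: "0 < ka \<and> ka \<le> 1 \<and> 0 < k1 \<and> k1 < k2 \<and> k2 \<le> 1 \<and> opt_sat_cond M ka k1 \<and> opt_sat_cond M ka k2"
    then show "(\<exists>p. is_eq_price M ka k1 p) \<and> (\<exists>p. is_eq_price M ka k2 p) \<and>
       (\<forall>p1 p2. is_eq_price M ka k1 p1 \<and> is_eq_price M ka k2 p2 \<longrightarrow>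
          p1 < p2 \<and>
          (\<forall>Phi\<in>{0<..mPhimax M}. user_util M ka p2 Phi < user_util M ka p1 Phi) \<and>
          Rev M ka p2 < Rev M ka p1 \<and>
          usurplus M ka p2 < usurplus M ka p1 \<and>
          welfare M ka p2 < welfare M ka p1)"
      using part1[of ka k1 k2] by blast
  qed
  have B: "\<forall>ka kp. 0 < ka \<and> ka \<le> 1 \<and> 0 < kp \<and> kp \<le> 1 \<and> opt_sat_cond M ka kp \<longrightarrow>
       (\<exists>D. ((\<lambda>k. Rev M ka (eq_price M ka k)) has_real_derivative D) (at kp within {0<..1})
            \<and> D < 0)"
  proof (intro allI impI)
    fix ka kp
    assume h: "0 < ka \<and> ka \<le> 1 \<and> 0 < kp \<and> kp \<le> 1 \<and> opt_sat_cond M ka kp"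
    then obtain D where "((\<lambda>k. Rev M ka (eq_price M ka k)) has_real_derivative D) (at kp)" "D < 0"
      using deriv_part by blast
    then show "\<exists>D. ((\<lambda>k. Rev M ka (eq_price M ka k)) has_real_derivative D) (at kp within {0<..1}) \<and> D < 0"
      using has_field_derivative_at_within by blast
  qed
  have C: "\<forall>kp a1 a2. 0 < kp \<and> kp \<le> 1 \<and> 0 < a1 \<and> a1 < a2 \<and> a2 \<le> 1 \<and>
       opt_unsat_cond M a1 kp \<and> opt_unsat_cond M a2 kp \<longrightarrow>
       (\<exists>p. is_eq_price M a1 kp p) \<and> (\<exists>p. is_eq_price M a2 kp p) \<and>
       (\<forall>p1 p2. is_eq_price M a1 kp p1 \<and> is_eq_price M a2 kp p2 \<longrightarrow>
          p1 * a1 < p2 * a2 \<and>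
          (\<forall>Phi\<in>{0<..mPhimax M}. user_util M a2 p2 Phi < user_util M a1 p1 Phi) \<and>
          Rev M a2 p2 < Rev M a1 p1 \<and>
          usurplus M a2 p2 < usurplus M a1 p1 \<and>
          welfare M a2 p2 < welfare M a1 p1)"
  proof (intro allI impI)
    fix kp a1 a2
    assume h: "0 < kp \<and> kp \<le> 1 \<and> 0 < a1 \<and> a1 < a2 \<and> a2 \<le> 1 \<and> opt_unsat_cond M a1 kp \<and> opt_unsat_cond M a2 kp"
    then show "(\<exists>p. is_eq_price M a1 kp p) \<and> (\<exists>p. is_eq_price M a2 kp p) \<and>
       (\<forall>p1 p2. is_eq_price M a1 kp p1 \<and> is_eq_price M a2 kp p2 \<longrightarrow>
          p1 * a1 < p2 * a2 \<and>
          (\<forall>Phi\<in>{0<..mPhimax M}. user_util M a2 p2 Phi < user_util M a1 p1 Phi) \<and>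
          Rev M a2 p2 < Rev M a1 p1 \<and>
          usurplus M a2 p2 < usurplus M a1 p1 \<and>
          welfare M a2 p2 < welfare M a1 p1)"
      using part3[of kp a1 a2] by blast
  qed
  show ?thesis using A B C by blast
qed

end
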